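(* Let $m^N_1$ be a smooth positive probability density on $(\mathbb{R}^d)^N$, let $m^k_1$ be its marginal density in $(v_1,\dots,v_k)$, let $\nu$ be a smooth positive probability density on $\mathbb{R}^d$, $m^k_2=\nu^{\otimes k}$, and $f_k=m^k_1/m^k_2$. Define $$I^k=\int m^k_2\frac{\|\nabla f_k\|^2}{f_k},\quad J^k=\int m^k_2\frac{\|\nabla^2f_k\|^2}{f_k},\quad K^k=\int m^k_2\frac{\|\nabla^3f_k\|^2}{f_k}\quad(\text{values in }[0,\infty]),$$ where $\nabla^j$ is the full $j$-th derivative in $(v_1,\dots,v_k)$. Then for all $1\le k\le N-1$, $$I^k\le I^{k+1},\qquad J^k\le J^{k+1},\qquad K^k\le K^{k+1}.$$
   Context: Norms of derivative tensors are Euclidean (Frobenius) norms. In the paper this is applied with $m^N_1=\mu^{N,N}_t$ (the particle law) and $\nu=\bar\mu_t$. *)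

theory Defs
  imports "HOL-Analysis.Analysis"
begin

text \<open>A configuration of n particles in R^d is an extensional function
  nat => real^'d on the index set {..<n} (particle i has position x i).
  Coordinates of (R^d)^n are indexed by pairs (i, a) with i < n, a :: 'd.\<close>

type_synonym ('d) cfg = "nat \<Rightarrow> real^'d"

definition conf :: "nat \<Rightarrow> ('d::finite) cfg set" where
  "conf n = PiE {..<n} (\<lambda>_. UNIV)"

definition dirs :: "nat \<Rightarrow> (nat \<times> 'd::finite) set" where
  "dirs n = {..<n} \<times> (UNIV :: 'd set)"

definition pdir :: "'d::finite cfg \<Rightarrow> nat \<times> 'd \<Rightarrow> real \<Rightarrow> 'd cfg" where
  "pdir x p t = x(fst p := x (fst p) + t *\<^sub>R axis (snd p) 1)"

definition partial :: "nat \<times> 'd::finite \<Rightarrow> ('d cfg \<Rightarrow> real) \<Rightarrow> 'd cfg \<Rightarrow> real" where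
  "partial p g x = deriv (\<lambda>t. g (pdir x p t)) 0"

fun iter_partial :: "(nat \<times> 'd::finite) list \<Rightarrow> ('d cfg \<Rightarrow> real) \<Rightarrow> 'd cfg \<Rightarrow> real" where
  "iter_partial [] g = g"
| "iter_partial (p # ps) g = partial p (iter_partial ps g)"

text \<open>C^infinity on (R^d)^n: all iterated partial derivatives exist (as genuine
  derivatives) and are continuous.\<close>
definition smooth_conf :: "nat \<Rightarrow> ('d::finite cfg \<Rightarrow> real) \<Rightarrow> bool" where
  "smooth_conf n g \<longleftrightarrow>
     (\<forall>ps. set ps \<subseteq> dirs n \<longrightarrow>
        continuous_on (conf n) (iter_partial ps g) \<and>
        (\<forall>p\<in>dirs n. \<forall>x\<in>conf n.
           ((\<lambda>t. iter_partial ps g (pdir x p t)) has_real_derivative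
              iter_partial (p # ps) g x) (at 0)))"

text \<open>Squared Euclidean (Frobenius) norm of the full j-th derivative tensor.\<close>
definition dnorm2 :: "nat \<Rightarrow> nat \<Rightarrow> ('d::finite cfg \<Rightarrow> real) \<Rightarrow> 'd cfg \<Rightarrow> real" where
  "dnorm2 n j g x =
     (\<Sum>ps\<in>{ps. set ps \<subseteq> dirs n \<and> length ps = j}. (iter_partial ps g x)\<^sup>2)"

definition lebPi :: "nat \<Rightarrow> 'd::finite cfg measure" where
  "lebPi n = PiM {..<n} (\<lambda>_. lborel)"

definition smooth_pos_density :: "nat \<Rightarrow> ('d::finite cfg \<Rightarrow> real) \<Rightarrow> bool" where
  "smooth_pos_density n m \<longleftrightarrow>
     m \<in> borel_measurable (lebPi n) \<and> (\<forall>x\<in>conf n. m x > 0) \<and>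
     smooth_conf n m \<and> (\<integral>\<^sup>+ x. ennreal (m x) \<partial>lebPi n) = 1"

text \<open>Smooth positive probability density on R^d (smoothness via the
  one-particle configuration space).\<close>
definition smooth_pos_density_Rd :: "(real^'d::finite \<Rightarrow> real) \<Rightarrow> bool" where
  "smooth_pos_density_Rd \<nu> \<longleftrightarrow>
     \<nu> \<in> borel_measurable lborel \<and> (\<forall>v. \<nu> v > 0) \<and>
     smooth_conf 1 (\<lambda>x. \<nu> (x 0)) \<and> (\<integral>\<^sup>+ v. ennreal (\<nu> v) \<partial>lborel) = 1"

definition marginal :: "nat \<Rightarrow> ('d::finite cfg \<Rightarrow> real) \<Rightarrow> nat \<Rightarrow> 'd cfg \<Rightarrow> real" where
  "marginal N m k x =
     (\<integral> y. m (merge {..<k} {k..<N} (x, y)) \<partial>PiM {k..<N} (\<lambda>_. lborel))"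

definition tensor_pow :: "(real^'d::finite \<Rightarrow> real) \<Rightarrow> nat \<Rightarrow> 'd cfg \<Rightarrow> real" where
  "tensor_pow \<nu> k x = (\<Prod>i<k. \<nu> (x i))"

definition ratio :: "nat \<Rightarrow> ('d::finite cfg \<Rightarrow> real) \<Rightarrow> (real^'d \<Rightarrow> real) \<Rightarrow> nat \<Rightarrow> 'd cfg \<Rightarrow> real" where
  "ratio N m \<nu> k x = marginal N m k x / tensor_pow \<nu> k x"

text \<open>info N m nu j k = integral of m_2^k |nabla^j f_k|^2 / f_k (j=1: I^k, 2: J^k, 3: K^k).\<close>
definition info :: "nat \<Rightarrow> ('d::finite cfg \<Rightarrow> real) \<Rightarrow> (real^'d \<Rightarrow> real) \<Rightarrow> nat \<Rightarrow> nat \<Rightarrow> ennreal" where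
  "info N m \<nu> j k =
     (\<integral>\<^sup>+ x. ennreal (tensor_pow \<nu> k x * dnorm2 k j (ratio N m \<nu> k) x / ratio N m \<nu> k x)
        \<partial>lebPi k)"

end

theory Submission
  imports Defs
begin

lemma conf_iff: "x \<in> conf n \<longleftrightarrow> (\<forall>j. j \<ge> n \<longrightarrow> x j = undefined)"
  by (auto simp: conf_def PiE_def extensional_def)

lemma dirs_iff[simp]: "p \<in> dirs n \<longleftrightarrow> fst p < n"
  by (cases p) (auto simp: dirs_def)

lemma pdir_apply: "pdir x p t j = (if j = fst p then x j + t *\<^sub>R axis (snd p) 1 else x j)"
  by (simp add: pdir_def)

lemma pdir_conf: "x \<in> conf n \<Longrightarrow> p \<in> dirs n \<Longrightarrow> pdir x p t \<in> conf n"
  by (auto simp: conf_iff pdir_apply)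

lemma pdir_0[simp]: "pdir x p 0 = x"
  by (simp add: pdir_def)

lemma pdir_pdir[simp]: "pdir (pdir x p s) p t = pdir x p (s + t)"
  by (rule ext) (simp add: pdir_apply scaleR_add_left algebra_simps)

lemma continuous_on_pdir: "continuous_on S (\<lambda>t. pdir x p t)"
proof (intro continuous_on_coordinatewise_then_product)
  fix i show "continuous_on S (\<lambda>t. pdir x p t i)"
    unfolding pdir_apply by (cases "i = fst p") (auto intro!: continuous_intros)
qed

lemma iter_partial_snoc: "iter_partial (ps @ [p]) g = iter_partial ps (partial p g)"
  by (induction ps) auto

lemma iter_partial_cong:
  assumes "\<forall>y\<in>conf n. u y = v y" "set ps \<subseteq> dirs n" "x \<in> conf n"
  shows "iter_partial ps u x = iter_partial ps v x"
  using assms(2,3)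
proof (induction ps arbitrary: x)
  case Nil then show ?case using assms(1) by simp
next
  case (Cons p ps)
  have "(\<lambda>t. iter_partial ps u (pdir x p t)) = (\<lambda>t. iter_partial ps v (pdir x p t))"
    using Cons by (auto intro!: Cons.IH pdir_conf)
  then show ?case by (simp add: partial_def)
qed

definition Dk :: "nat \<Rightarrow> nat \<Rightarrow> ('d::finite cfg \<Rightarrow> real) \<Rightarrow> bool" where
  "Dk r n g \<longleftrightarrow> (\<forall>ps. set ps \<subseteq> dirs n \<longrightarrow> length ps \<le> r \<longrightarrow>
     continuous_on (conf n) (iter_partial ps g) \<and>
     (\<forall>p\<in>dirs n. \<forall>x\<in>conf n.
        ((\<lambda>t. iter_partial ps g (pdir x p t)) has_real_derivative iter_partial (p # ps) g x) (at 0)))"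

lemma smooth_conf_Dk: "smooth_conf n g \<longleftrightarrow> (\<forall>r. Dk r n g)"
  unfolding smooth_conf_def Dk_def by (meson order_refl)

lemma Dk_mono: "Dk r n g \<Longrightarrow> r' \<le> r \<Longrightarrow> Dk r' n g"
  unfolding Dk_def by auto

lemma Dk0_iff: "Dk 0 n g \<longleftrightarrow> continuous_on (conf n) g \<and>
   (\<forall>p\<in>dirs n. \<forall>x\<in>conf n. ((\<lambda>t. g (pdir x p t)) has_real_derivative partial p g x) (at 0))"
  unfolding Dk_def by auto

lemma Dk0I:
  assumes "continuous_on (conf n) g"
    "\<And>p x. p \<in> dirs n \<Longrightarrow> x \<in> conf n \<Longrightarrow> \<exists>D. ((\<lambda>t. g (pdir x p t)) has_real_derivative D) (at 0)"
  shows "Dk 0 n g"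
  unfolding Dk0_iff partial_def using assms DERIV_imp_deriv by metis

lemma Dk_Suc: fixes g :: "'d::finite cfg \<Rightarrow> real" shows "Dk (Suc r) n g \<longleftrightarrow> Dk 0 n g \<and> (\<forall>p\<in>dirs n. Dk r n (partial p g))"
proof
  assume A: "Dk (Suc r) n g"
  show "Dk 0 n g \<and> (\<forall>p\<in>dirs n. Dk r n (partial p g))"
  proof
    show "Dk 0 n g" using A Dk_mono by blast
    show "\<forall>p\<in>dirs n. Dk r n (partial p g)"
    proof (intro ballI)
      fix p :: "nat \<times> 'd" assume p: "p \<in> dirs n"
      show "Dk r n (partial p g)" unfolding Dk_def
      proof (intro allI impI)
        fix ps :: "(nat \<times> 'd) list" assume ps: "set ps \<subseteq> dirs n" "length ps \<le> r"
        have "set (ps @ [p]) \<subseteq> dirs n" "length (ps @ [p]) \<le> Suc r" using ps p by auto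
        with A have "continuous_on (conf n) (iter_partial (ps @ [p]) g) \<and>
          (\<forall>q\<in>dirs n. \<forall>x\<in>conf n. ((\<lambda>t. iter_partial (ps @ [p]) g (pdir x q t)) has_real_derivative iter_partial (q # ps @ [p]) g x) (at 0))"
          unfolding Dk_def by blast
        then show "continuous_on (conf n) (iter_partial ps (partial p g)) \<and>
          (\<forall>q\<in>dirs n. \<forall>x\<in>conf n. ((\<lambda>t. iter_partial ps (partial p g) (pdir x q t)) has_real_derivative iter_partial (q # ps) (partial p g) x) (at 0))"
          by (simp add: iter_partial_snoc)
      qed
    qed
  qed
next
  assume A: "Dk 0 n g \<and> (\<forall>p\<in>dirs n. Dk r n (partial p g))"
  show "Dk (Suc r) n g" unfolding Dk_def
  proof (intro allI impI)
    fix ps :: "(nat \<times> 'd) list" assume ps: "set ps \<subseteq> dirs n" "length ps \<le> Suc r"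
    show "continuous_on (conf n) (iter_partial ps g) \<and>
          (\<forall>q\<in>dirs n. \<forall>x\<in>conf n. ((\<lambda>t. iter_partial ps g (pdir x q t)) has_real_derivative iter_partial (q # ps) g x) (at 0))"
    proof (cases "ps = []")
      case True then show ?thesis using A unfolding Dk0_iff by simp
    next
      case False
      then obtain qs p where qs: "ps = qs @ [p]" by (metis append_butlast_last_id)
      have "p \<in> dirs n" "set qs \<subseteq> dirs n" "length qs \<le> r" using ps qs by auto
      then have "continuous_on (conf n) (iter_partial qs (partial p g)) \<and>
          (\<forall>q\<in>dirs n. \<forall>x\<in>conf n. ((\<lambda>t. iter_partial qs (partial p g) (pdir x q t)) has_real_derivative iter_partial (q # qs) (partial p g) x) (at 0))"
        using A unfolding Dk_def by blast
      then show ?thesis unfolding qs by (simp add: iter_partial_snoc)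
    qed
  qed
qed

lemma Dk_deriv_at:
  assumes "Dk 0 n g" "x \<in> conf n" "p \<in> dirs n"
  shows "((\<lambda>t. g (pdir x p t)) has_real_derivative partial p g (pdir x p s)) (at s)"
proof -
  have "((\<lambda>t. g (pdir (pdir x p s) p t)) has_real_derivative partial p g (pdir x p s)) (at 0)"
    using assms pdir_conf unfolding Dk0_iff by blast
  then have "((\<lambda>t. g (pdir x p (t + s))) has_real_derivative partial p g (pdir x p s)) (at 0)"
    by (simp add: add.commute)
  then show ?thesis using DERIV_shift[of "\<lambda>t. g (pdir x p t)" _ 0 s] by simp
qed

lemma Dk_cong:
  fixes g :: "'d::finite cfg \<Rightarrow> real"
  assumes "Dk r n g" "\<forall>x\<in>conf n. g x = g' x"
  shows "Dk r n g'"
  unfolding Dk_def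
proof (intro allI impI conjI ballI)
  fix ps :: "(nat \<times> 'd) list" assume ps: "set ps \<subseteq> dirs n" "length ps \<le> r"
  have e: "\<And>qs y. set qs \<subseteq> dirs n \<Longrightarrow> y \<in> conf n \<Longrightarrow> iter_partial qs g y = iter_partial qs g' y"
    using iter_partial_cong assms(2) by blast
  have "continuous_on (conf n) (iter_partial ps g)" using assms(1) ps unfolding Dk_def by blast
  then show "continuous_on (conf n) (iter_partial ps g')"
    using e ps continuous_on_cong by fastforce
  fix p :: "nat \<times> 'd" and x :: "'d cfg" assume px: "p \<in> dirs n" "x \<in> conf n"
  have "((\<lambda>t. iter_partial ps g (pdir x p t)) has_real_derivative iter_partial (p # ps) g x) (at 0)"
    using assms(1) ps px unfolding Dk_def by blast
  moreover have "(\<lambda>t. iter_partial ps g (pdir x p t)) = (\<lambda>t. iter_partial ps g' (pdir x p t))"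
    using e ps px pdir_conf by blast
  moreover have "iter_partial (p # ps) g x = iter_partial (p # ps) g' x"
    using e[of "p # ps" x] ps px by simp
  ultimately show "((\<lambda>t. iter_partial ps g' (pdir x p t)) has_real_derivative iter_partial (p # ps) g' x) (at 0)"
    by simp
qed

lemma partial_eqI:
  assumes "((\<lambda>t. g (pdir x p t)) has_real_derivative D) (at 0)"
  shows "partial p g x = D"
  using assms by (simp add: partial_def DERIV_imp_deriv)

lemma Dk_const: "Dk r n (\<lambda>_. c)"
proof (induction r arbitrary: c)
  case 0 then show ?case by (auto intro!: Dk0I continuous_intros exI[of _ 0])
next
  case (Suc r)
  have "partial p (\<lambda>_::'a cfg. c) = (\<lambda>_. 0)" for p
    by (rule ext, rule partial_eqI) simp
  then show ?case using Suc by (auto simp: Dk_Suc intro!: Dk0I continuous_intros exI[of _ 0])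
qed

lemma Dk_cont: "Dk r n g \<Longrightarrow> continuous_on (conf n) g"
  using Dk_mono Dk0_iff by blast

lemma Dk_has_partial: "Dk r n g \<Longrightarrow> p \<in> dirs n \<Longrightarrow> x \<in> conf n \<Longrightarrow>
   ((\<lambda>t. g (pdir x p t)) has_real_derivative partial p g x) (at 0)"
  using Dk_mono Dk0_iff by blast

lemma Dk_partial: "Dk (Suc r) n g \<Longrightarrow> p \<in> dirs n \<Longrightarrow> Dk r n (partial p g)"
  using Dk_Suc by blast

lemma Dk_add:
  fixes f g :: "'d::finite cfg \<Rightarrow> real"
  assumes "Dk r n f" "Dk r n g"
  shows "Dk r n (\<lambda>x. f x + g x)"
  using assms
proof (induction r arbitrary: f g)
  case 0
  show ?case
  proof (rule Dk0I)
    show "continuous_on (conf n) (\<lambda>x. f x + g x)" using 0 by (auto intro!: continuous_intros dest: Dk_cont)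
    fix p :: "nat \<times> 'd" and x :: "'d cfg" assume "p \<in> dirs n" "x \<in> conf n"
    then show "\<exists>D. ((\<lambda>t. f (pdir x p t) + g (pdir x p t)) has_real_derivative D) (at 0)"
      using DERIV_add[OF Dk_has_partial[OF 0(1)] Dk_has_partial[OF 0(2)]] by blast
  qed
next
  case (Suc r)
  have pe: "partial p (\<lambda>x. f x + g x) x = partial p f x + partial p g x" if "p \<in> dirs n" "x \<in> conf n" for p x
    using Suc.prems that by (intro partial_eqI DERIV_add Dk_has_partial)
  show ?case unfolding Dk_Suc
  proof
    show "Dk 0 n (\<lambda>x. f x + g x)"
    proof (rule Dk0I)
      show "continuous_on (conf n) (\<lambda>x. f x + g x)" using Suc.prems by (auto intro!: continuous_intros dest: Dk_cont)
      fix p :: "nat \<times> 'd" and x :: "'d cfg" assume "p \<in> dirs n" "x \<in> conf n"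
      then show "\<exists>D. ((\<lambda>t. f (pdir x p t) + g (pdir x p t)) has_real_derivative D) (at 0)"
        using DERIV_add[OF Dk_has_partial[OF Suc.prems(1)] Dk_has_partial[OF Suc.prems(2)]] by blast
    qed
    show "\<forall>p\<in>dirs n. Dk r n (partial p (\<lambda>x. f x + g x))"
      using Suc.IH Suc.prems pe Dk_partial Dk_cong by (smt (verit))
  qed
qed

lemma Dk_mult:
  fixes f g :: "'d::finite cfg \<Rightarrow> real"
  assumes "Dk r n f" "Dk r n g"
  shows "Dk r n (\<lambda>x. f x * g x)"
  using assms
proof (induction r arbitrary: f g)
  case 0
  show ?case
  proof (rule Dk0I)
    show "continuous_on (conf n) (\<lambda>x. f x * g x)" using 0 by (auto intro!: continuous_intros dest: Dk_cont)
    fix p :: "nat \<times> 'd" and x :: "'d cfg" assume "p \<in> dirs n" "x \<in> conf n"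
    then show "\<exists>D. ((\<lambda>t. f (pdir x p t) * g (pdir x p t)) has_real_derivative D) (at 0)"
      using DERIV_mult[OF Dk_has_partial[OF 0(1)] Dk_has_partial[OF 0(2)]] by blast
  qed
next
  case (Suc r)
  have pe: "partial p (\<lambda>x. f x * g x) x = partial p f x * g x + partial p g x * f x" if "p \<in> dirs n" "x \<in> conf n" for p x
    using DERIV_mult[OF Dk_has_partial[OF Suc.prems(1) that] Dk_has_partial[OF Suc.prems(2) that]]
    by (intro partial_eqI) simp
  show ?case unfolding Dk_Suc
  proof
    show "Dk 0 n (\<lambda>x. f x * g x)"
    proof (rule Dk0I)
      show "continuous_on (conf n) (\<lambda>x. f x * g x)" using Suc.prems by (auto intro!: continuous_intros dest: Dk_cont)
      fix p :: "nat \<times> 'd" and x :: "'d cfg" assume "p \<in> dirs n" "x \<in> conf n"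
      then show "\<exists>D. ((\<lambda>t. f (pdir x p t) * g (pdir x p t)) has_real_derivative D) (at 0)"
        using DERIV_mult[OF Dk_has_partial[OF Suc.prems(1)] Dk_has_partial[OF Suc.prems(2)]] by blast
    qed
    show "\<forall>p\<in>dirs n. Dk r n (partial p (\<lambda>x. f x * g x))"
    proof
      fix p :: "nat \<times> 'd" assume p: "p \<in> dirs n"
      have "Dk r n (\<lambda>x. partial p f x * g x + partial p g x * f x)"
        using Suc p by (intro Dk_add Suc.IH) (auto intro: Dk_partial Dk_mono)
      then show "Dk r n (partial p (\<lambda>x. f x * g x))"
        using pe p Dk_cong by (smt (verit))
    qed
  qed
qed

lemma Dk_minus: "Dk r n f \<Longrightarrow> Dk r n (\<lambda>x. - f x)"
  using Dk_mult[OF Dk_const[of r n "-1"]] by simp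

lemma Dk_diff: "Dk r n f \<Longrightarrow> Dk r n g \<Longrightarrow> Dk r n (\<lambda>x. f x - g x)"
  using Dk_add[OF _ Dk_minus] by simp

lemma Dk_sum: "(\<And>i. i \<in> I \<Longrightarrow> Dk r n (f i)) \<Longrightarrow> Dk r n (\<lambda>x. \<Sum>i\<in>I. f i x)"
proof (induction I rule: infinite_finite_induct)
  case (infinite A) then show ?case using Dk_const by simp
next
  case empty then show ?case using Dk_const by simp
next
  case (insert a A) then show ?case by (simp add: Dk_add)
qed

lemma Dk_prod: "(\<And>i. i \<in> I \<Longrightarrow> Dk r n (f i)) \<Longrightarrow> Dk r n (\<lambda>x. \<Prod>i\<in>I. f i x)"
proof (induction I rule: infinite_finite_induct)
  case (infinite A) then show ?case using Dk_const by simp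
next
  case empty then show ?case using Dk_const by simp
next
  case (insert a A) then show ?case by (simp add: Dk_mult)
qed

primrec hD :: "nat \<Rightarrow> (real \<Rightarrow> real) \<Rightarrow> real set \<Rightarrow> bool" where
  "hD 0 h U = (continuous_on U h \<and> (\<exists>h'. \<forall>y\<in>U. (h has_real_derivative h' y) (at y)))"
| "hD (Suc r) h U = (continuous_on U h \<and> (\<exists>h'. (\<forall>y\<in>U. (h has_real_derivative h' y) (at y)) \<and> hD r h' U))"

lemma Dk_comp:
  fixes f :: "'d::finite cfg \<Rightarrow> real"
  assumes "open U" "hD r h U" "Dk r n f" "\<forall>x\<in>conf n. f x \<in> U"
  shows "Dk r n (\<lambda>x. h (f x))"
  using assms(2,3)
proof (induction r arbitrary: h)
  case 0
  then obtain h' where h': "\<forall>y\<in>U. (h has_real_derivative h' y) (at y)" "continuous_on U h" by auto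
  have c: "continuous_on (conf n) (\<lambda>x. h (f x))"
    using continuous_on_compose2[OF h'(2) Dk_cont[OF 0(2)]] assms(4) by auto
  show ?case
  proof (rule Dk0I[OF c])
    fix p :: "nat \<times> 'd" and x :: "'d cfg" assume px: "p \<in> dirs n" "x \<in> conf n"
    have hx: "(h has_real_derivative h' (f (pdir x p 0))) (at (f (pdir x p 0)))" using h' assms(4) px by simp
    show "\<exists>D. ((\<lambda>t. h (f (pdir x p t))) has_real_derivative D) (at 0)"
      using DERIV_chain2[OF hx Dk_has_partial[OF 0(2) px]] by blast
  qed
next
  case (Suc r)
  then obtain h' where h': "\<forall>y\<in>U. (h has_real_derivative h' y) (at y)" "continuous_on U h" "hD r h' U" by auto
  have c: "continuous_on (conf n) (\<lambda>x. h (f x))"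
    using continuous_on_compose2[OF h'(2) Dk_cont[OF Suc(3)]] assms(4) by auto
  have pe: "partial p (\<lambda>x. h (f x)) x = h' (f x) * partial p f x" if px: "p \<in> dirs n" "x \<in> conf n" for p x
  proof -
    have hx: "(h has_real_derivative h' (f (pdir x p 0))) (at (f (pdir x p 0)))" using h' assms(4) px by simp
    show ?thesis using DERIV_chain2[OF hx Dk_has_partial[OF Suc(3) px]] by (intro partial_eqI) simp
  qed
  show ?case unfolding Dk_Suc
  proof
    show "Dk 0 n (\<lambda>x. h (f x))"
    proof (rule Dk0I[OF c])
      fix p :: "nat \<times> 'd" and x :: "'d cfg" assume px: "p \<in> dirs n" "x \<in> conf n"
      have hx: "(h has_real_derivative h' (f (pdir x p 0))) (at (f (pdir x p 0)))" using h' assms(4) px by simp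
      show "\<exists>D. ((\<lambda>t. h (f (pdir x p t))) has_real_derivative D) (at 0)"
        using DERIV_chain2[OF hx Dk_has_partial[OF Suc(3) px]] by blast
    qed
    show "\<forall>p\<in>dirs n. Dk r n (partial p (\<lambda>x. h (f x)))"
    proof
      fix p :: "nat \<times> 'd" assume p: "p \<in> dirs n"
      have "Dk r n (\<lambda>x. h' (f x))" using Suc.IH[OF h'(3)] Dk_mono[OF Suc(3)] by simp
      moreover have "Dk r n (partial p f)" using Dk_partial[OF Suc(3) p] .
      ultimately have "Dk r n (\<lambda>x. h' (f x) * partial p f x)" by (rule Dk_mult)
      then show "Dk r n (partial p (\<lambda>x. h (f x)))"
        using pe p Dk_cong by (smt (verit))
    qed
  qed
qed

lemma Dk_map:
  fixes \<Phi> :: "'d::finite cfg \<Rightarrow> 'd cfg"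
  assumes "\<forall>x\<in>conf n. \<Phi> x \<in> conf m" "continuous_on (conf n) \<Phi>"
    "\<forall>p\<in>dirs n. (\<exists>q\<in>dirs m. \<forall>x\<in>conf n. \<forall>t. \<Phi> (pdir x p t) = pdir (\<Phi> x) q t) \<or>
                (\<forall>x\<in>conf n. \<forall>t. \<Phi> (pdir x p t) = \<Phi> x)"
    "Dk r m g"
  shows "Dk r n (\<lambda>x. g (\<Phi> x))"
  using assms(4)
proof (induction r arbitrary: g)
  have D0: "Dk 0 n (\<lambda>x. g (\<Phi> x))" if g0: "Dk 0 m g" for g
  proof -
    have c: "continuous_on (conf n) (\<lambda>x. g (\<Phi> x))"
      using continuous_on_compose2[OF Dk_cont[OF g0] assms(2)] assms(1) by auto
    show ?thesis
    proof (rule Dk0I[OF c])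
      fix p :: "nat \<times> 'd" and x :: "'d cfg" assume px: "p \<in> dirs n" "x \<in> conf n"
      have "(\<exists>q\<in>dirs m. \<forall>x\<in>conf n. \<forall>t. \<Phi> (pdir x p t) = pdir (\<Phi> x) q t) \<or>
                (\<forall>x\<in>conf n. \<forall>t. \<Phi> (pdir x p t) = \<Phi> x)" using assms(3) px by blast
      then show "\<exists>D. ((\<lambda>t. g (\<Phi> (pdir x p t))) has_real_derivative D) (at 0)"
      proof
        assume "\<exists>q\<in>dirs m. \<forall>x\<in>conf n. \<forall>t. \<Phi> (pdir x p t) = pdir (\<Phi> x) q t"
        then obtain q where q: "q \<in> dirs m" "\<forall>x\<in>conf n. \<forall>t. \<Phi> (pdir x p t) = pdir (\<Phi> x) q t" by blast
        have "\<Phi> x \<in> conf m" using assms(1) px by blast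
        from Dk_has_partial[OF g0 q(1) this] have "((\<lambda>t. g (pdir (\<Phi> x) q t)) has_real_derivative partial q g (\<Phi> x)) (at 0)" .
        moreover have "(\<lambda>t. g (\<Phi> (pdir x p t))) = (\<lambda>t. g (pdir (\<Phi> x) q t))" using q px by auto
        ultimately show ?thesis by auto
      next
        assume "\<forall>x\<in>conf n. \<forall>t. \<Phi> (pdir x p t) = \<Phi> x"
        then show ?thesis using px by (auto intro: exI[of _ 0])
      qed
    qed
  qed
  {
    case 0 then show ?case using D0 by blast
  next
    case (Suc r)
    show ?case unfolding Dk_Suc
    proof
      show "Dk 0 n (\<lambda>x. g (\<Phi> x))" using D0 Suc.prems Dk_mono by blast
      show "\<forall>p\<in>dirs n. Dk r n (partial p (\<lambda>x. g (\<Phi> x)))"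
      proof
        fix p :: "nat \<times> 'd" assume p: "p \<in> dirs n"
        have "(\<exists>q\<in>dirs m. \<forall>x\<in>conf n. \<forall>t. \<Phi> (pdir x p t) = pdir (\<Phi> x) q t) \<or>
                (\<forall>x\<in>conf n. \<forall>t. \<Phi> (pdir x p t) = \<Phi> x)" using assms(3) p by blast
        then show "Dk r n (partial p (\<lambda>x. g (\<Phi> x)))"
        proof
          assume "\<exists>q\<in>dirs m. \<forall>x\<in>conf n. \<forall>t. \<Phi> (pdir x p t) = pdir (\<Phi> x) q t"
          then obtain q where q: "q \<in> dirs m" "\<forall>x\<in>conf n. \<forall>t. \<Phi> (pdir x p t) = pdir (\<Phi> x) q t" by blast
          have "Dk r n (\<lambda>x. partial q g (\<Phi> x))" using Suc.IH Suc.prems q(1) Dk_partial by blast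
          moreover have "\<forall>x\<in>conf n. partial q g (\<Phi> x) = partial p (\<lambda>x. g (\<Phi> x)) x"
          proof
            fix x :: "'d cfg" assume x: "x \<in> conf n"
            have "\<Phi> x \<in> conf m" using assms(1) x by blast
            from Dk_has_partial[OF Suc.prems q(1) this]
            have "((\<lambda>t. g (pdir (\<Phi> x) q t)) has_real_derivative partial q g (\<Phi> x)) (at 0)" .
            moreover have "(\<lambda>t. g (\<Phi> (pdir x p t))) = (\<lambda>t. g (pdir (\<Phi> x) q t))" using q x by auto
            ultimately show "partial q g (\<Phi> x) = partial p (\<lambda>x. g (\<Phi> x)) x"
              by (intro partial_eqI[symmetric]) auto
          qed
          ultimately show ?thesis by (rule Dk_cong)
        next
          assume "\<forall>x\<in>conf n. \<forall>t. \<Phi> (pdir x p t) = \<Phi> x"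
          then have "\<forall>x\<in>conf n. 0 = partial p (\<lambda>x. g (\<Phi> x)) x"
          proof (intro ballI)
            fix x :: "'d cfg" assume "\<forall>x\<in>conf n. \<forall>t. \<Phi> (pdir x p t) = \<Phi> x" "x \<in> conf n"
            then have "(\<lambda>t. g (\<Phi> (pdir x p t))) = (\<lambda>t. g (\<Phi> x))" by auto
            then show "0 = partial p (\<lambda>x. g (\<Phi> x)) x" by (simp add: partial_def)
          qed
          then show ?thesis using Dk_const Dk_cong by blast
        qed
      qed
    qed
  }
qed

lemma Dk_iter: "Dk (r + length ps) n g \<Longrightarrow> set ps \<subseteq> dirs n \<Longrightarrow> Dk r n (iter_partial ps g)"
proof (induction ps arbitrary: r)
  case Nil then show ?case by simp
next
  case (Cons p ps)
  have "Dk (Suc r) n (iter_partial ps g)" using Cons.IH[of "Suc r"] Cons.prems by simp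
  from Dk_partial[OF this] Cons.prems show ?case by simp
qed

lemma Dk_lin:
  fixes g :: "'d::finite cfg \<Rightarrow> real"
  assumes "continuous_on (conf n) g" "\<forall>x\<in>conf n. \<forall>p\<in>dirs n. \<forall>t. g (pdir x p t) = g x + t * c p"
  shows "Dk r n g"
proof -
  have lin: "((\<lambda>t. A + t * B) has_real_derivative B) (at 0)" for A B :: real
    by (auto intro!: derivative_eq_intros)
  have d0: "Dk 0 n g"
  proof (rule Dk0I[OF assms(1)])
    fix p :: "nat \<times> 'd" and x :: "'d cfg" assume px: "p \<in> dirs n" "x \<in> conf n"
    have "((\<lambda>t. g (pdir x p t)) has_real_derivative c p) (at 0)" using assms(2) lin px by auto
    then show "\<exists>D. ((\<lambda>t. g (pdir x p t)) has_real_derivative D) (at 0)" by blast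
  qed
  have pe: "\<forall>x\<in>conf n. c p = partial p g x" if "p \<in> dirs n" for p
    using assms that lin by (auto intro!: partial_eqI[symmetric])
  show ?thesis
  proof (cases r)
    case 0 then show ?thesis using d0 by simp
  next
    case (Suc r')
    show ?thesis unfolding Suc Dk_Suc using d0 pe Dk_const Dk_cong by blast
  qed
qed

lemma Dk_coord:
  assumes "i < n"
  shows "Dk r n (\<lambda>x. x i $ a)"
proof (rule Dk_lin[where c = "\<lambda>p. if p = (i, a) then 1 else 0"])
  show "continuous_on (conf n) (\<lambda>x::'a cfg. x i $ a)"
    by (intro continuous_intros continuous_on_product_then_coordinatewise continuous_on_id)
  show "\<forall>x\<in>conf n. \<forall>p\<in>dirs n. \<forall>t. pdir x p t i $ a = x i $ a + t * (if p = (i, a) then 1 else 0)"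
    by (auto simp: pdir_apply axis_def)
qed

lemma psf: "product_sigma_finite (\<lambda>_. lborel :: 'a::euclidean_space measure)"
  by (simp add: product_sigma_finite_def sigma_finite_lborel)

lemma space_lebPi[simp]: "space (lebPi n) = conf n"
  by (simp add: lebPi_def space_PiM conf_def)

definition boxc :: "nat \<Rightarrow> real \<Rightarrow> 'd::finite cfg set" where
  "boxc n R = {x \<in> conf n. \<forall>i<n. norm (x i) \<le> R}"

definition supp_in :: "nat \<Rightarrow> real \<Rightarrow> ('d::finite cfg \<Rightarrow> real) \<Rightarrow> bool" where
  "supp_in n R g \<longleftrightarrow> (\<forall>x\<in>conf n. x \<notin> boxc n R \<longrightarrow> g x = 0)"

lemma boxc_PiE: "boxc n R = PiE {..<n} (\<lambda>_. cball 0 R)"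
  by (auto simp: boxc_def conf_def PiE_def Pi_def)

lemma boxc_PiE_UNIV: "boxc n R = PiE UNIV (\<lambda>i. if i < n then cball 0 R else {undefined})"
  by (auto simp: boxc_def conf_def PiE_def Pi_def extensional_def split: if_splits)

lemma boxc_sub: "boxc n R \<subseteq> conf n"
  by (auto simp: boxc_def)

lemma boxc_mono: "R \<le> R' \<Longrightarrow> boxc n R \<subseteq> boxc n R'"
  by (auto simp: boxc_def)

lemma compact_boxc: "compact (boxc n R :: 'd::finite cfg set)"
proof -
  have "compactin (product_topology (\<lambda>_. euclidean) UNIV) (PiE UNIV (\<lambda>i. if i < n then cball (0::real^'d) R else {undefined}))"
    by (subst compactin_PiE) auto
  then show ?thesis by (simp add: boxc_PiE_UNIV euclidean_product_topology)
qed

lemma cont_bounded_box: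
  fixes g :: "'d::finite cfg \<Rightarrow> real"
  assumes "continuous_on (conf n) g"
  shows "\<exists>C. \<forall>x\<in>boxc n R. \<bar>g x\<bar> \<le> C"
proof -
  have "compact (g ` boxc n R)"
    using compact_continuous_image[OF continuous_on_subset[OF assms boxc_sub] compact_boxc] .
  then obtain a where "\<forall>y\<in>g ` boxc n R. norm y \<le> a" using compact_imp_bounded bounded_iff by metis
  then show ?thesis by auto
qed

lemma cont_meas:
  fixes g :: "'d::finite cfg \<Rightarrow> real"
  assumes "continuous_on (conf n) g"
  shows "g \<in> borel_measurable (lebPi n)"
proof -
  let ?r = "\<lambda>y::'d cfg. restrict y {..<n}"
  have cr: "continuous_on UNIV ?r"
  proof (intro continuous_on_coordinatewise_then_product)
    fix i show "continuous_on UNIV (\<lambda>y::'d cfg. restrict y {..<n} i)"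
      by (cases "i < n") (auto intro!: continuous_intros continuous_on_product_then_coordinatewise)
  qed
  have rc: "?r ` UNIV \<subseteq> conf n" by (auto simp: conf_iff restrict_def)
  have "continuous_on UNIV (\<lambda>y. g (?r y))"
    using continuous_on_compose2[OF assms cr rc] .
  then have g1: "(\<lambda>y. g (?r y)) \<in> borel_measurable borel" by (rule borel_measurable_continuous_onI)
  have "(\<lambda>x::'d cfg. \<lambda>i::nat. x i) \<in> measurable (lebPi n) (PiM (UNIV::nat set) (\<lambda>_. borel :: (real^'d) measure))"
  proof (rule measurable_PiM_single')
    fix i :: nat
    show "(\<lambda>x::'d cfg. x i) \<in> borel_measurable (lebPi n)"
    proof (cases "i < n")
      case True
      then have "(\<lambda>x::'d cfg. x i) \<in> measurable (lebPi n) lborel"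
        unfolding lebPi_def by (intro measurable_component_singleton) auto
      then show ?thesis using measurable_cong_sets[OF refl sets_lborel] by simp
    next
      case False
      have "(\<lambda>x::'d cfg. undefined :: real^'d) \<in> borel_measurable (lebPi n)" by simp
      moreover have "\<And>x. x \<in> space (lebPi n) \<Longrightarrow> (undefined :: real^'d) = x i"
        using False by (simp add: conf_iff)
      ultimately show ?thesis using measurable_cong[of "lebPi n" "\<lambda>x. undefined" "\<lambda>x. x i" borel] by blast
    qed
  next
    show "(\<lambda>x::'d cfg. \<lambda>i. x i) \<in> space (lebPi n) \<rightarrow> (\<Pi>\<^sub>E i\<in>UNIV. space borel)"
      by simp
  qed
  moreover have "measurable (lebPi n :: 'd cfg measure) (PiM UNIV (\<lambda>_. borel :: (real^'d) measure)) = measurable (lebPi n :: 'd cfg measure) (borel :: 'd cfg measure)"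
    by (rule measurable_cong_sets) (simp_all add: sets_PiM_equal_borel)
  ultimately have idm: "(\<lambda>x. x) \<in> measurable (lebPi n :: 'd cfg measure) (borel :: 'd cfg measure)"
    by simp
  have "(\<lambda>x. g (?r x)) \<in> borel_measurable (lebPi n)"
    using measurable_comp[OF idm g1] by (simp add: comp_def)
  moreover have "\<And>x. x \<in> space (lebPi n) \<Longrightarrow> g (?r x) = g x"
    by (auto simp: conf_def extensional_restrict PiE_def)
  ultimately show ?thesis using measurable_cong[of "lebPi n" "\<lambda>x. g (?r x)" g borel] by blast
qed

lemma boxc_sets: "boxc n R \<in> sets (lebPi n)"
  unfolding boxc_PiE lebPi_def by (intro sets_PiM_I_finite) auto

lemma emeasure_boxc: "emeasure (lebPi n) (boxc n R :: 'd::finite cfg set) < \<infinity>"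
proof -
  have "emeasure (lebPi n) (boxc n R :: 'd cfg set) = (\<Prod>i\<in>{..<n}. emeasure lborel (cball (0::real^'d) R))"
    unfolding boxc_PiE lebPi_def by (subst product_sigma_finite.emeasure_PiM[OF psf]) auto
  also have "\<dots> < \<infinity>" using emeasure_lborel_cball_finite[of "0::real^'d" R]
    by (simp add: power_less_top_ennreal)
  finally show ?thesis .
qed

lemma integrable_supp:
  fixes g :: "'d::finite cfg \<Rightarrow> real"
  assumes "continuous_on (conf n) g" "supp_in n R g"
  shows "integrable (lebPi n) g"
proof -
  obtain C where C: "\<forall>x\<in>boxc n R. \<bar>g x\<bar> \<le> C" using cont_bounded_box[OF assms(1)] by blast
  have "integrable (lebPi n) (\<lambda>x. C * indicator (boxc n R) x)"
    using boxc_sets emeasure_boxc by (intro integrable_mult_right integrable_real_indicator) auto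
  moreover have "AE x in lebPi n. norm (g x) \<le> norm (C * indicator (boxc n R) x)"
    using C assms(2) by (auto simp: supp_in_def indicator_def intro!: AE_I2)
  ultimately show ?thesis using Bochner_Integration.integrable_bound[OF _ cont_meas[OF assms(1)]] by blast
qed

lemma pdir_meas:
  assumes "p \<in> dirs n"
  shows "(\<lambda>x. pdir x p t) \<in> measurable (lebPi n) (lebPi n)"
proof -
  have "(\<lambda>x. \<lambda>i. pdir x p t i) \<in> measurable (lebPi n) (PiM {..<n} (\<lambda>_. lborel))"
  proof (rule measurable_PiM_single')
    fix i assume i: "i \<in> {..<n}"
    have m: "(\<lambda>x::'a cfg. x i) \<in> measurable (lebPi n) lborel"
      using i unfolding lebPi_def by (intro measurable_component_singleton) auto
    then have m': "(\<lambda>x::'a cfg. x i) \<in> borel_measurable (lebPi n)"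
      using measurable_cong_sets[OF refl sets_lborel] by simp
    have c: "(\<lambda>y::real^'a. y + t *\<^sub>R axis (snd p) 1) \<in> borel_measurable borel"
      by (intro borel_measurable_continuous_onI continuous_intros)
    have "(\<lambda>x. pdir x p t i) \<in> borel_measurable (lebPi n)"
    proof (cases "i = fst p")
      case True
      then have "(\<lambda>x. pdir x p t i) = (\<lambda>x. (\<lambda>y::real^'a. y + t *\<^sub>R axis (snd p) 1) (x i))"
        by (simp add: pdir_apply)
      then show ?thesis using measurable_comp[OF m' c] by (simp add: comp_def)
    next
      case False
      then have "(\<lambda>x. pdir x p t i) = (\<lambda>x. x i)" by (simp add: pdir_apply fun_eq_iff)
      then show ?thesis using m' by simp
    qed
    then show "(\<lambda>x. pdir x p t i) \<in> measurable (lebPi n) lborel"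
      using measurable_cong_sets[OF refl sets_lborel] by simp
  next
    show "(\<lambda>x. pdir x p t) \<in> space (lebPi n) \<rightarrow> (\<Pi>\<^sub>E i\<in>{..<n}. space lborel)"
      using pdir_conf[OF _ assms] by (auto simp: conf_def)
  qed
  then show ?thesis by (simp add: lebPi_def)
qed

lemma distr_pdir:
  fixes p :: "nat \<times> 'd::finite"
  assumes p: "p \<in> dirs n"
  shows "distr (lebPi n) (lebPi n) (\<lambda>x. pdir x p t) = lebPi n"
proof -
  let ?c = "t *\<^sub>R axis (snd p) (1::real) :: real^'d"
  interpret P: product_sigma_finite "\<lambda>_::nat. lborel :: (real^'d) measure" by (rule psf)
  show ?thesis unfolding lebPi_def
  proof (rule P.PiM_eqI)
    fix A assume A: "\<And>i. i \<in> {..<n} \<Longrightarrow> A i \<in> sets (lborel :: (real^'d) measure)"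
    define A' where "A' i = (if i = fst p then (\<lambda>y. ?c + y) -` A i else A i)" for i
    have cm: "((+) ?c) \<in> measurable borel borel" by (intro borel_measurable_continuous_onI continuous_intros)
    have A': "A' i \<in> sets lborel" if "i \<in> {..<n}" for i
      using A[OF that] measurable_sets[OF cm, of "A i"] unfolding A'_def by auto
    have pre: "(\<lambda>x. pdir x p t) -` PiE {..<n} A \<inter> space (PiM {..<n} (\<lambda>_. lborel)) = PiE {..<n} A'"
      using p by (auto simp: A'_def pdir_apply space_PiM PiE_def Pi_def extensional_def add.commute split: if_splits)
    have em: "emeasure lborel (A' i) = emeasure lborel (A i)" if "i \<in> {..<n}" for i
    proof (cases "i = fst p")
      case True
      have "emeasure lborel (A i) = emeasure (distr lborel borel ((+) ?c)) (A i)"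
        by (simp add: lborel_distr_plus)
      also have "\<dots> = emeasure lborel ((+) ?c -` A i \<inter> space lborel)"
        using A[OF that] by (intro emeasure_distr) auto
      finally show ?thesis using True by (simp add: A'_def)
    qed (simp add: A'_def)
    have "emeasure (distr (PiM {..<n} (\<lambda>_. lborel)) (PiM {..<n} (\<lambda>_. lborel)) (\<lambda>x. pdir x p t)) (PiE {..<n} A)
       = emeasure (PiM {..<n} (\<lambda>_. lborel)) (PiE {..<n} A')"
      using pdir_meas[OF p] A by (subst emeasure_distr) (auto simp: lebPi_def pre intro!: sets_PiM_I_finite)
    also have "\<dots> = (\<Prod>i\<in>{..<n}. emeasure lborel (A' i))"
      using A' by (intro P.emeasure_PiM) auto
    also have "\<dots> = (\<Prod>i\<in>{..<n}. emeasure lborel (A i))"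
      using em by simp
    finally show "emeasure (distr (PiM {..<n} (\<lambda>_. lborel)) (PiM {..<n} (\<lambda>_. lborel)) (\<lambda>x. pdir x p t)) (PiE {..<n} A)
       = (\<Prod>i\<in>{..<n}. emeasure lborel (A i))" .
  qed auto
qed

lemma integral_pdir:
  fixes f :: "'d::finite cfg \<Rightarrow> real"
  assumes "p \<in> dirs n" "f \<in> borel_measurable (lebPi n)"
  shows "(\<integral>x. f (pdir x p t) \<partial>lebPi n) = (\<integral>x. f x \<partial>lebPi n)"
  using integral_distr[OF pdir_meas[OF assms(1)] assms(2), of t] distr_pdir[OF assms(1)] by simp

lemma mvt_bound:
  assumes "Dk 0 n g" "x \<in> conf n" "p \<in> dirs n"
    and C: "\<And>s. \<bar>s\<bar> \<le> \<bar>t\<bar> \<Longrightarrow> \<bar>partial p g (pdir x p s)\<bar> \<le> C"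
  shows "\<bar>g (pdir x p t) - g x\<bar> \<le> C * \<bar>t\<bar>"
proof -
  have d: "\<And>s. ((\<lambda>s. g (pdir x p s)) has_real_derivative partial p g (pdir x p s)) (at s)"
    using Dk_deriv_at[OF assms(1-3)] .
  consider "t = 0" | "t > 0" | "t < 0" by linarith
  then show ?thesis
  proof cases
    case 1 then show ?thesis by simp
  next
    case 2
    obtain z where z: "0 < z" "z < t" "g (pdir x p t) - g (pdir x p 0) = (t - 0) * partial p g (pdir x p z)"
      using MVT2[OF 2 d] by blast
    have "\<bar>partial p g (pdir x p z)\<bar> \<le> C" using C z 2 by auto
    then show ?thesis using z 2 by (simp add: abs_mult mult.commute mult_right_mono)
  next
    case 3
    obtain z where z: "t < z" "z < 0" "g (pdir x p 0) - g (pdir x p t) = (0 - t) * partial p g (pdir x p z)"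
      using MVT2[OF 3 d] by blast
    have "\<bar>partial p g (pdir x p z)\<bar> \<le> C" using C z 3 by auto
    then have "\<bar>g (pdir x p 0) - g (pdir x p t)\<bar> \<le> C * \<bar>t\<bar>" using z 3 by (simp add: abs_mult mult.commute mult_right_mono)
    then show ?thesis by simp
  qed
qed

lemma pdir_boxc:
  assumes "x \<in> boxc n R" "p \<in> dirs n" "\<bar>s\<bar> \<le> d"
  shows "pdir x p s \<in> boxc n (R + d)"
proof -
  have "norm (x i + s *\<^sub>R axis (snd p) 1) \<le> R + d" if "i < n" for i
    using norm_triangle_ineq[of "x i" "s *\<^sub>R axis (snd p) (1::real)"] assms that
    by (auto simp: boxc_def)
  moreover have "norm (x i) \<le> R + d" if "i < n" for i
    using assms that by (auto simp: boxc_def)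
  ultimately show ?thesis using assms pdir_conf[of x n p s] by (auto simp: boxc_def pdir_apply)
qed

lemma pdir_not_boxc:
  assumes "x \<in> conf n" "x \<notin> boxc n (R + d)" "p \<in> dirs n" "\<bar>s\<bar> \<le> d"
  shows "pdir x p s \<notin> boxc n R"
proof
  assume "pdir x p s \<in> boxc n R"
  from pdir_boxc[OF this assms(3), of "-s"] assms(4) have "x \<in> boxc n (R + d)" by simp
  with assms(2) show False by simp
qed

lemma supp_partial:
  fixes G :: "'d::finite cfg \<Rightarrow> real"
  assumes "Dk 0 n G" "supp_in n R G" "p \<in> dirs n"
  shows "supp_in n R (partial p G)"
  unfolding supp_in_def
proof (intro ballI impI)
  fix x :: "'d cfg" assume x: "x \<in> conf n" "x \<notin> boxc n R"
  then obtain i where i: "i < n" "norm (x i) > R" by (auto simp: boxc_def not_le)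
  let ?S = "{s. norm (pdir x p s i) > R}"
  have op: "open ?S"
    using continuous_on_product_then_coordinatewise[OF continuous_on_pdir[of UNIV x p], of i]
    by (intro open_Collect_less continuous_intros) (auto intro: continuous_on_subset)
  have "0 \<in> ?S" using i by simp
  have z: "G (pdir x p s) = 0" if "s \<in> ?S" for s
  proof -
    have "pdir x p s \<notin> boxc n R" using that i by (auto simp: boxc_def not_le)
    then show ?thesis using assms(2) pdir_conf[OF x(1) assms(3)] by (auto simp: supp_in_def)
  qed
  have "((\<lambda>s. G (pdir x p s)) has_real_derivative partial p G x) (at 0)"
    using Dk_has_partial[OF assms(1) assms(3) x(1)] .
  then have "((\<lambda>s. 0) has_real_derivative partial p G x) (at 0)"
    by (rule has_field_derivative_transform_within_open[OF _ op \<open>0 \<in> ?S\<close>]) (use z in auto)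
  then show "partial p G x = 0" using DERIV_unique DERIV_const by blast
qed

lemma cont_pdir_comp:
  fixes F :: "'d::finite cfg \<Rightarrow> real"
  assumes "continuous_on (conf n) F" "p \<in> dirs n"
  shows "continuous_on (conf n) (\<lambda>x. F (pdir x p s))"
proof -
  have c: "continuous_on (conf n) (\<lambda>x::'d cfg. pdir x p s)"
  proof (intro continuous_on_coordinatewise_then_product)
    fix i
    have ci: "continuous_on (conf n) (\<lambda>x::'d cfg. x j)" for j
      by (rule continuous_on_subset[OF continuous_on_product_coordinates]) simp
    show "continuous_on (conf n) (\<lambda>x::'d cfg. pdir x p s i)"
      unfolding pdir_apply
      by (cases "i = fst p") (simp_all add: ci continuous_on_add continuous_on_const)
  qed
  have "(\<lambda>x. pdir x p s) ` conf n \<subseteq> conf n" by (auto intro: pdir_conf[OF _ assms(2)])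
  then show ?thesis by (rule continuous_on_compose2[OF assms(1) c])
qed

lemma dq_lim:
  fixes f :: "real \<Rightarrow> real"
  assumes "(f has_real_derivative D) (at 0)" "filterlim t (at 0) sequentially"
  shows "(\<lambda>l. (f (t l) - f 0) / t l) \<longlonglongrightarrow> D"
proof -
  from assms(1)[unfolded DERIV_def] have "((\<lambda>h. (f (0 + h) - f 0) / h) \<longlongrightarrow> D) (at 0)" .
  then have "((\<lambda>h. (f h - f 0) / h) \<longlongrightarrow> D) (at 0)" by simp
  from filterlim_compose[OF this assms(2)] show ?thesis .
qed

lemma ibp1:
  fixes F G :: "'d::finite cfg \<Rightarrow> real"
  assumes p: "p \<in> dirs n" and F: "Dk 1 n F" and G: "Dk 1 n G" and S: "supp_in n R G"
  shows "(\<integral>x. G x * partial p F x \<partial>lebPi n) = - (\<integral>x. partial p G x * F x \<partial>lebPi n)"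
proof -
  define t where "t l = inverse (real (Suc l))" for l
  have t: "t l > 0" "t l \<le> 1" for l unfolding t_def by (auto simp: field_simps)
  have tl0: "t \<longlonglongrightarrow> 0" unfolding t_def by (rule LIMSEQ_inverse_real_of_nat)
  have tn: "t l \<noteq> 0" for l using t[of l] by linarith
  have tabs: "\<bar>- t l\<bar> \<le> 1" "\<bar>t l\<bar> \<le> 1" for l using t[of l] by auto
  have tl: "filterlim t (at 0) sequentially"
    using tl0 tn by (simp add: filterlim_at)
  have tl': "filterlim (\<lambda>l. - t l) (at 0) sequentially"
    using tendsto_minus[OF tl0] tn by (simp add: filterlim_at)
  have F0: "Dk 0 n F" and G0: "Dk 0 n G" using F G Dk_mono by auto
  have dF0: "Dk 0 n (partial p F)" and dG0: "Dk 0 n (partial p G)"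
    using Dk_partial[of 0 n F p] Dk_partial[of 0 n G p] F G p by auto
  have cF: "continuous_on (conf n) F" and cG: "continuous_on (conf n) G"
    and cdF: "continuous_on (conf n) (partial p F)" and cdG: "continuous_on (conf n) (partial p G)"
    using F0 G0 dF0 dG0 Dk_cont by blast+
  obtain CF where CF: "\<forall>x\<in>boxc n (R+2). \<bar>F x\<bar> \<le> CF" using cont_bounded_box[OF cF] by blast
  obtain CG where CG: "\<forall>x\<in>boxc n (R+2). \<bar>G x\<bar> \<le> CG" using cont_bounded_box[OF cG] by blast
  obtain CdF where CdF: "\<forall>x\<in>boxc n (R+2). \<bar>partial p F x\<bar> \<le> CdF" using cont_bounded_box[OF cdF] by blast
  obtain CdG where CdG: "\<forall>x\<in>boxc n (R+2). \<bar>partial p G x\<bar> \<le> CdG" using cont_bounded_box[OF cdG] by blast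
  have bR: "boxc n R \<subseteq> boxc n (R+1)" "boxc n (R+1) \<subseteq> boxc n (R+2)" "boxc n R \<subseteq> boxc n (R+2)"
    by (rule boxc_mono, simp)+
  have bF: "\<bar>(F (pdir x p s) - F x) / s\<bar> \<le> \<bar>CdF\<bar>" if x: "x \<in> boxc n (R+1)" and s: "\<bar>s\<bar> \<le> 1" for x s
  proof -
    have "\<bar>F (pdir x p s) - F x\<bar> \<le> \<bar>CdF\<bar> * \<bar>s\<bar>"
    proof (rule mvt_bound[OF F0 _ p])
      show "x \<in> conf n" using x boxc_sub by blast
      fix s' :: real assume "\<bar>s'\<bar> \<le> \<bar>s\<bar>"
      then have "pdir x p s' \<in> boxc n (R + 1 + 1)" using pdir_boxc[OF x p, of s' 1] s by simp
      then show "\<bar>partial p F (pdir x p s')\<bar> \<le> \<bar>CdF\<bar>" using CdF by (force simp add: add.assoc)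
    qed
    then show ?thesis by (cases "s = 0") (auto simp: abs_divide divide_le_eq)
  qed
  have bG: "\<bar>(G (pdir x p s) - G x) / s\<bar> \<le> \<bar>CdG\<bar>" if x: "x \<in> boxc n (R+1)" and s: "\<bar>s\<bar> \<le> 1" for x s
  proof -
    have "\<bar>G (pdir x p s) - G x\<bar> \<le> \<bar>CdG\<bar> * \<bar>s\<bar>"
    proof (rule mvt_bound[OF G0 _ p])
      show "x \<in> conf n" using x boxc_sub by blast
      fix s' :: real assume "\<bar>s'\<bar> \<le> \<bar>s\<bar>"
      then have "pdir x p s' \<in> boxc n (R + 1 + 1)" using pdir_boxc[OF x p, of s' 1] s by simp
      then show "\<bar>partial p G (pdir x p s')\<bar> \<le> \<bar>CdG\<bar>" using CdG by (force simp add: add.assoc)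
    qed
    then show ?thesis by (cases "s = 0") (auto simp: abs_divide divide_le_eq)
  qed
  have Gz: "G x = 0" if "x \<in> conf n" "x \<notin> boxc n R" for x using S that by (auto simp: supp_in_def)
  have Gz': "G (pdir x p s) = 0" if "x \<in> conf n" "x \<notin> boxc n (R + 1)" "\<bar>s\<bar> \<le> 1" for x s
    using Gz[OF pdir_conf[OF that(1) p] pdir_not_boxc[OF that(1,2) p that(3)]] .
  define Q where "Q l x = G x * ((F (pdir x p (t l)) - F x) / t l)" for l x
  define P where "P l x = F x * ((G (pdir x p (- t l)) - G x) / t l)" for l x
  have cQ: "continuous_on (conf n) (Q l)" for l
    unfolding Q_def by (intro continuous_intros cG cF cont_pdir_comp[OF cF p]) (simp add: tn)
  have cP: "continuous_on (conf n) (P l)" for l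
    unfolding P_def by (intro continuous_intros cG cF cont_pdir_comp[OF cG p]) (simp add: tn)
  have eqQP: "integral\<^sup>L (lebPi n) (Q l) = integral\<^sup>L (lebPi n) (P l)" for l
  proof -
    let ?\<tau> = "t l"
    have i1: "integrable (lebPi n) (\<lambda>x. G x * F (pdir x p ?\<tau>))"
      by (rule integrable_supp[where R=R]) (auto intro!: continuous_intros cG cont_pdir_comp[OF cF p] simp: supp_in_def Gz)
    have i2: "integrable (lebPi n) (\<lambda>x. G x * F x)"
      by (rule integrable_supp[where R=R]) (auto intro!: continuous_intros cG cF simp: supp_in_def Gz)
    have i3: "integrable (lebPi n) (\<lambda>x. F x * G (pdir x p (- ?\<tau>)))"
      by (rule integrable_supp[where R="R+1"]) (auto intro!: continuous_intros cF cont_pdir_comp[OF cG p] simp: supp_in_def Gz' tabs)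
    have i4: "integrable (lebPi n) (\<lambda>x. F x * G x)"
      by (rule integrable_supp[where R=R]) (auto intro!: continuous_intros cG cF simp: supp_in_def Gz)
    have m: "(\<lambda>y. F y * G (pdir y p (- ?\<tau>))) \<in> borel_measurable (lebPi n)"
      by (intro cont_meas continuous_intros cF cont_pdir_comp[OF cG p])
    have tr: "(\<integral>x. G x * F (pdir x p ?\<tau>) \<partial>lebPi n) = (\<integral>x. F x * G (pdir x p (- ?\<tau>)) \<partial>lebPi n)"
    proof -
      have "(\<integral>x. F x * G (pdir x p (- ?\<tau>)) \<partial>lebPi n) = (\<integral>x. (\<lambda>y. F y * G (pdir y p (- ?\<tau>))) (pdir x p ?\<tau>) \<partial>lebPi n)"
        by (rule integral_pdir[symmetric, OF p m])
      also have "\<dots> = (\<integral>x. G x * F (pdir x p ?\<tau>) \<partial>lebPi n)" by (simp add: mult.commute)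
      finally show ?thesis by simp
    qed
    have "integral\<^sup>L (lebPi n) (Q l) = (\<integral>x. (G x * F (pdir x p ?\<tau>) - G x * F x) / ?\<tau> \<partial>lebPi n)"
      unfolding Q_def by (simp add: right_diff_distrib)
    also have "\<dots> = ((\<integral>x. G x * F (pdir x p ?\<tau>) \<partial>lebPi n) - (\<integral>x. G x * F x \<partial>lebPi n)) / ?\<tau>"
      using i1 i2 by simp
    also have "\<dots> = ((\<integral>x. F x * G (pdir x p (- ?\<tau>)) \<partial>lebPi n) - (\<integral>x. F x * G x \<partial>lebPi n)) / ?\<tau>"
      using tr by (simp add: mult.commute)
    also have "\<dots> = (\<integral>x. (F x * G (pdir x p (- ?\<tau>)) - F x * G x) / ?\<tau> \<partial>lebPi n)"
      using i3 i4 by simp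
    also have "\<dots> = integral\<^sup>L (lebPi n) (P l)"
      unfolding P_def by (simp add: right_diff_distrib)
    finally show ?thesis .
  qed
  have limQ: "(\<lambda>l. integral\<^sup>L (lebPi n) (Q l)) \<longlonglongrightarrow> (\<integral>x. G x * partial p F x \<partial>lebPi n)"
  proof (rule integral_dominated_convergence[where w = "\<lambda>x. \<bar>CG\<bar> * \<bar>CdF\<bar> * indicator (boxc n R) x"])
    show "(\<lambda>x. G x * partial p F x) \<in> borel_measurable (lebPi n)"
      by (intro cont_meas continuous_intros cG cdF)
    show "Q l \<in> borel_measurable (lebPi n)" for l by (intro cont_meas cQ)
    show "integrable (lebPi n) (\<lambda>x. \<bar>CG\<bar> * \<bar>CdF\<bar> * indicator (boxc n R) x)"
      using boxc_sets emeasure_boxc by (intro integrable_mult_right integrable_real_indicator) auto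
    show "AE x in lebPi n. (\<lambda>l. Q l x) \<longlonglongrightarrow> G x * partial p F x"
    proof (rule AE_I2)
      fix x :: "'d cfg" assume "x \<in> space (lebPi n)"
      then have x: "x \<in> conf n" by simp
      have "(\<lambda>l. (F (pdir x p (t l)) - F (pdir x p 0)) / t l) \<longlonglongrightarrow> partial p F x"
        by (rule dq_lim[OF Dk_has_partial[OF F0 p x] tl])
      then show "(\<lambda>l. Q l x) \<longlonglongrightarrow> G x * partial p F x"
        unfolding Q_def by (intro tendsto_mult_left) simp
    qed
    show "AE x in lebPi n. norm (Q l x) \<le> \<bar>CG\<bar> * \<bar>CdF\<bar> * indicator (boxc n R) x" for l
    proof (rule AE_I2)
      fix x :: "'d cfg" assume "x \<in> space (lebPi n)"
      then have x: "x \<in> conf n" by simp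
      show "norm (Q l x) \<le> \<bar>CG\<bar> * \<bar>CdF\<bar> * indicator (boxc n R) x"
      proof (cases "x \<in> boxc n R")
        case True
        have "\<bar>G x\<bar> \<le> \<bar>CG\<bar>" using CG True bR by fastforce
        moreover have "\<bar>(F (pdir x p (t l)) - F x) / t l\<bar> \<le> \<bar>CdF\<bar>"
          using bF[of x "t l"] True bR t[of l] by fastforce
        ultimately have "\<bar>G x\<bar> * \<bar>(F (pdir x p (t l)) - F x) / t l\<bar> \<le> \<bar>CG\<bar> * \<bar>CdF\<bar>"
          by (intro mult_mono) auto
        then show ?thesis using True unfolding Q_def real_norm_def abs_mult by simp
      next
        case False then show ?thesis using Gz[OF x] unfolding Q_def by simp
      qed
    qed
  qed
  have limP: "(\<lambda>l. integral\<^sup>L (lebPi n) (P l)) \<longlonglongrightarrow> (\<integral>x. F x * - partial p G x \<partial>lebPi n)"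
  proof (rule integral_dominated_convergence[where w = "\<lambda>x. \<bar>CF\<bar> * \<bar>CdG\<bar> * indicator (boxc n (R+1)) x"])
    show "(\<lambda>x. F x * - partial p G x) \<in> borel_measurable (lebPi n)"
      by (intro cont_meas continuous_intros cF cdG)
    show "P l \<in> borel_measurable (lebPi n)" for l by (intro cont_meas cP)
    show "integrable (lebPi n) (\<lambda>x. \<bar>CF\<bar> * \<bar>CdG\<bar> * indicator (boxc n (R+1)) x)"
      using boxc_sets emeasure_boxc by (intro integrable_mult_right integrable_real_indicator) auto
    show "AE x in lebPi n. (\<lambda>l. P l x) \<longlonglongrightarrow> F x * - partial p G x"
    proof (rule AE_I2)
      fix x :: "'d cfg" assume "x \<in> space (lebPi n)"
      then have x: "x \<in> conf n" by simp
      have "(\<lambda>l. (G (pdir x p (- t l)) - G (pdir x p 0)) / (- t l)) \<longlonglongrightarrow> partial p G x"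
        by (rule dq_lim[OF Dk_has_partial[OF G0 p x] tl'])
      then have "(\<lambda>l. - ((G (pdir x p (- t l)) - G x) / (- t l))) \<longlonglongrightarrow> - partial p G x"
        by (intro tendsto_minus) simp
      then have "(\<lambda>l. (G (pdir x p (- t l)) - G x) / t l) \<longlonglongrightarrow> - partial p G x"
        by simp
      then show "(\<lambda>l. P l x) \<longlonglongrightarrow> F x * - partial p G x"
        unfolding P_def by (intro tendsto_mult_left)
    qed
    show "AE x in lebPi n. norm (P l x) \<le> \<bar>CF\<bar> * \<bar>CdG\<bar> * indicator (boxc n (R+1)) x" for l
    proof (rule AE_I2)
      fix x :: "'d cfg" assume "x \<in> space (lebPi n)"
      then have x: "x \<in> conf n" by simp
      show "norm (P l x) \<le> \<bar>CF\<bar> * \<bar>CdG\<bar> * indicator (boxc n (R+1)) x"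
      proof (cases "x \<in> boxc n (R+1)")
        case True
        have "\<bar>F x\<bar> \<le> \<bar>CF\<bar>" using CF True bR by fastforce
        moreover have "\<bar>(G (pdir x p (- t l)) - G x) / (- t l)\<bar> \<le> \<bar>CdG\<bar>"
          using bG[of x "- t l"] True t[of l] by fastforce
        then have "\<bar>(G (pdir x p (- t l)) - G x) / t l\<bar> \<le> \<bar>CdG\<bar>"
          by (simp add: abs_divide)
        ultimately have "\<bar>F x\<bar> * \<bar>(G (pdir x p (- t l)) - G x) / t l\<bar> \<le> \<bar>CF\<bar> * \<bar>CdG\<bar>"
          by (intro mult_mono) auto
        then show ?thesis using True unfolding P_def real_norm_def abs_mult by simp
      next
        case False
        then have "x \<notin> boxc n R" using bR by blast
        then show ?thesis using False Gz[OF x] Gz'[OF x False, of "- t l"] t[of l] unfolding P_def by simp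
      qed
    qed
  qed
  have "(\<integral>x. G x * partial p F x \<partial>lebPi n) = (\<integral>x. F x * - partial p G x \<partial>lebPi n)"
    using LIMSEQ_unique[OF limQ] limP eqQP by simp
  also have "\<dots> = - (\<integral>x. partial p G x * F x \<partial>lebPi n)"
    by (simp add: mult.commute)
  finally show ?thesis .
qed

lemma ibp_iter:
  fixes F G :: "'d::finite cfg \<Rightarrow> real"
  assumes "set ps \<subseteq> dirs n" "Dk (length ps) n F" "Dk (length ps) n G" "supp_in n R G"
  shows "(\<integral>x. G x * iter_partial ps F x \<partial>lebPi n) =
         (-1) ^ length ps * (\<integral>x. iter_partial (rev ps) G x * F x \<partial>lebPi n)"
  using assms
proof (induction ps arbitrary: G)
  case Nil then show ?case by simp
next
  case (Cons p ps)
  have p: "p \<in> dirs n" using Cons.prems by simp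
  have F1: "Dk 1 n (iter_partial ps F)"
    using Dk_iter[of 1 ps n F] Cons.prems by simp
  have G1: "Dk 1 n G" using Cons.prems Dk_mono by fastforce
  have G0: "Dk 0 n G" using G1 Dk_mono by blast
  have "(\<integral>x. G x * iter_partial (p # ps) F x \<partial>lebPi n) = - (\<integral>x. partial p G x * iter_partial ps F x \<partial>lebPi n)"
    using ibp1[OF p F1 G1 Cons.prems(4)] by simp
  also have "(\<integral>x. partial p G x * iter_partial ps F x \<partial>lebPi n) =
     (-1) ^ length ps * (\<integral>x. iter_partial (rev ps) (partial p G) x * F x \<partial>lebPi n)"
  proof (rule Cons.IH)
    show "set ps \<subseteq> dirs n" using Cons.prems by simp
    show "Dk (length ps) n F" using Cons.prems Dk_mono by fastforce
    show "Dk (length ps) n (partial p G)" using Dk_partial[of "length ps" n G p] Cons.prems p by simp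
    show "supp_in n R (partial p G)" using supp_partial[OF G0 Cons.prems(4) p] .
  qed
  finally show ?case by (simp add: iter_partial_snoc)
qed

lemma hD_cont: "hD r h U \<Longrightarrow> continuous_on U h"
  by (cases r) auto

lemma inv_pow_deriv:
  assumes "y + e \<noteq> 0"
  shows "((\<lambda>y. c / (y + e) ^ m) has_real_derivative (- c * real m / (y + e) ^ Suc m)) (at y)"
proof -
  have "((\<lambda>y. c * inverse ((y + e) ^ m)) has_real_derivative
          c * (- (inverse ((y + e) ^ m) * (real m * (y + e) ^ (m - 1) * 1) * inverse ((y + e) ^ m)))) (at y)"
  proof -
    have d1: "((\<lambda>y. (y + e) ^ m) has_real_derivative (real m * (y + e) ^ (m - 1) * 1)) (at y)"
      by (auto intro!: derivative_eq_intros)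
    have d2: "((\<lambda>y. inverse ((y + e) ^ m)) has_real_derivative
          - (inverse ((y + e) ^ m) * (real m * (y + e) ^ (m - 1) * 1) * inverse ((y + e) ^ m))) (at y)"
      by (rule DERIV_inverse'[OF d1]) (use assms in simp)
    then show ?thesis by (rule DERIV_cmult)
  qed
  moreover have "c * (- (inverse ((y + e) ^ m) * (real m * (y + e) ^ (m - 1) * 1) * inverse ((y + e) ^ m)))
      = - c * real m / (y + e) ^ Suc m"
  proof (cases m)
    case (Suc k)
    have key: "inverse (z ^ Suc k) * z ^ k * inverse (z ^ Suc k) = inverse (z ^ Suc (Suc k))" if "z \<noteq> 0" for z :: real
      using that by (simp add: field_simps power_Suc)
    have "c * (- (inverse ((y + e) ^ m) * (real m * (y + e) ^ (m - 1) * 1) * inverse ((y + e) ^ m)))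
        = - c * real m * (inverse ((y + e) ^ m) * (y + e) ^ (m - 1) * inverse ((y + e) ^ m))"
      by (simp add: algebra_simps)
    also have "\<dots> = - c * real m * inverse ((y + e) ^ Suc m)"
      using key[OF assms] Suc by simp
    finally show ?thesis by (simp add: divide_inverse)
  qed simp
  ultimately have "((\<lambda>y. c * inverse ((y + e) ^ m)) has_real_derivative - c * real m / (y + e) ^ Suc m) (at y)"
    by (rule DERIV_cong)
  then show ?thesis by (simp only: divide_inverse)
qed

lemma hD_inv:
  assumes "e \<ge> 0"
  shows "hD r (\<lambda>y. c / (y + e) ^ m) {y. - e < y}"
proof (induction r arbitrary: c m)
  have cont: "continuous_on {y. - e < y} (\<lambda>y. c / (y + e) ^ m)" for c m
    by (intro continuous_intros) auto
  have dd: "\<forall>y\<in>{y. - e < y}. ((\<lambda>y. c / (y + e) ^ m) has_real_derivative (- c * real m / (y + e) ^ Suc m)) (at y)" for c m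
    using inv_pow_deriv by auto
  {
    case 0
    show ?case unfolding hD.simps by (intro conjI cont exI[of _ "\<lambda>y. - c * real m / (y + e) ^ Suc m"] dd)
  next
    case (Suc r)
    show ?case unfolding hD.simps
      by (intro conjI cont exI[of _ "\<lambda>y. - c * real m / (y + e) ^ Suc m"] dd Suc.IH)
  }
qed

definition psi :: "nat \<Rightarrow> real \<Rightarrow> real" where
  "psi m s = (max 0 (1 - s)) ^ m"

lemma psi_cont: "continuous_on U (psi m)"
  unfolding psi_def by (intro continuous_intros)

lemma psi_deriv:
  assumes m: "2 \<le> m"
  shows "(psi m has_real_derivative (- real m * psi (m - 1) s)) (at s)"
proof -
  consider "s < 1" | "s > 1" | "s = 1" by linarith
  then show ?thesis
  proof cases
    case 1
    have "((\<lambda>s. (1 - s) ^ m) has_real_derivative (- real m * (1 - s) ^ (m - 1))) (at s)"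
      by (auto intro!: derivative_eq_intros)
    then have "((\<lambda>s. (1 - s) ^ m) has_real_derivative (- real m * psi (m - 1) s)) (at s)"
      using 1 by (simp add: psi_def)
    then show ?thesis
      by (rule has_field_derivative_transform_within_open[where S = "{..<1}"]) (use 1 in \<open>auto simp: psi_def\<close>)
  next
    case 2
    have "psi (m - 1) s = 0" using 2 m by (simp add: psi_def power_0_left)
    then have "((\<lambda>s. 0) has_real_derivative (- real m * psi (m - 1) s)) (at s)"
      by simp
    then show ?thesis
      by (rule has_field_derivative_transform_within_open[where S = "{1<..}"]) (use 2 m in \<open>auto simp: psi_def\<close>)
  next
    case 3
    have p0: "psi (m - 1) 1 = 0" using m by (simp add: psi_def)
    have "((\<lambda>h. (psi m (1 + h) - psi m 1) / h) \<longlongrightarrow> 0) (at 0)"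
    proof (rule Lim_null_comparison)
      show "\<forall>\<^sub>F h in at 0. norm ((psi m (1 + h) - psi m 1) / h) \<le> \<bar>h\<bar> ^ (m - 1)"
      proof (rule always_eventually, intro allI)
        fix h :: real
        have a: "max 0 (- h) ^ m \<le> \<bar>h\<bar> ^ m" by (intro power_mono) auto
        show "norm ((psi m (1 + h) - psi m 1) / h) \<le> \<bar>h\<bar> ^ (m - 1)"
        proof (cases "h = 0")
          case False
          have "\<bar>h\<bar> ^ m = \<bar>h\<bar> ^ (m - 1) * \<bar>h\<bar>" using m by (metis Suc_diff_le le_trans one_le_numeral power_Suc2 diff_Suc_1)
          then have "\<bar>h\<bar> ^ m / \<bar>h\<bar> = \<bar>h\<bar> ^ (m - 1)" using False by simp
          moreover have "max 0 (- h) ^ m / \<bar>h\<bar> \<le> \<bar>h\<bar> ^ m / \<bar>h\<bar>"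
            using a by (intro divide_right_mono) auto
          ultimately show ?thesis using m by (simp add: psi_def abs_divide power_0_left)
        qed simp
      qed
      have "((\<lambda>h::real. \<bar>h\<bar> ^ (m - 1)) \<longlongrightarrow> \<bar>0\<bar> ^ (m - 1)) (at 0)" by (intro tendsto_intros)
      moreover have "\<bar>0::real\<bar> ^ (m - 1) = 0" using m by simp
      ultimately show "((\<lambda>h::real. \<bar>h\<bar> ^ (m - 1)) \<longlongrightarrow> 0) (at 0)" by metis
    qed
    then have "(psi m has_real_derivative 0) (at 1)" by (simp add: DERIV_def)
    then show ?thesis using 3 p0 by simp
  qed
qed

lemma hD_psi:
  assumes "r + 2 \<le> m"
  shows "hD r (\<lambda>s. c * psi m s) UNIV"
  using assms
proof (induction r arbitrary: c m)
  case 0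
  show ?case using psi_deriv[of m] 0
    by (auto intro!: continuous_intros psi_cont exI[of _ "\<lambda>s. c * (- real m * psi (m - 1) s)"] DERIV_cmult)
next
  case (Suc r)
  have d: "((\<lambda>s. c * psi m s) has_real_derivative (c * - real m) * psi (m - 1) s) (at s)" for s
    using DERIV_cmult[OF psi_deriv[of m s], of c] Suc.prems by (simp add: mult.assoc)
  have "hD r (\<lambda>s. (c * - real m) * psi (m - 1) s) UNIV" by (rule Suc.IH) (use Suc.prems in simp)
  moreover have "continuous_on UNIV (\<lambda>s. c * psi m s)" by (intro continuous_intros psi_cont)
  ultimately show ?case unfolding hD.simps using d
    by (intro conjI exI[of _ "\<lambda>s. (c * - real m) * psi (m - 1) s"]) auto
qed

lemma psi_bounds: "0 \<le> s \<Longrightarrow> 0 \<le> psi m s \<and> psi m s \<le> 1"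
  unfolding psi_def by (auto intro: power_le_one)

lemma psi_mono: "s \<le> s' \<Longrightarrow> psi m s' \<le> psi m s"
  unfolding psi_def by (intro power_mono) auto

lemma psi_zero: "1 \<le> s \<Longrightarrow> 1 \<le> m \<Longrightarrow> psi m s = 0"
  unfolding psi_def by simp

lemma psi_0[simp]: "psi m 0 = 1"
  unfolding psi_def by simp

definition sqn :: "nat \<Rightarrow> 'd::finite cfg \<Rightarrow> real" where
  "sqn n x = (\<Sum>i<n. \<Sum>a\<in>UNIV. (x i $ a) * (x i $ a))"

definition chi :: "nat \<Rightarrow> nat \<Rightarrow> nat \<Rightarrow> 'd::finite cfg \<Rightarrow> real" where
  "chi m n l x = psi m (sqn n x * inverse ((real (Suc l))\<^sup>2))"

lemma Dk_sqn: "Dk r n (sqn n)"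
  unfolding sqn_def by (intro Dk_sum Dk_mult Dk_coord) auto

lemma Dk_chi:
  assumes "r + 2 \<le> m"
  shows "Dk r n (chi m n l :: 'd::finite cfg \<Rightarrow> real)"
proof -
  have "Dk r n (\<lambda>x::'d cfg. 1 * psi m (sqn n x * inverse ((real (Suc l))\<^sup>2)))"
    by (rule Dk_comp[OF open_UNIV hD_psi[OF assms]]) (auto intro!: Dk_mult Dk_sqn Dk_const)
  then show ?thesis unfolding chi_def by simp
qed

lemma sqn_nonneg: "0 \<le> sqn n x"
  unfolding sqn_def by (intro sum_nonneg) auto

lemma norm_sq_le_sqn: "i < n \<Longrightarrow> (norm (x i))\<^sup>2 \<le> sqn n x"
proof -
  assume i: "i < n"
  have "(norm (x i))\<^sup>2 = (\<Sum>a\<in>UNIV. (x i $ a) * (x i $ a))"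
    by (simp add: power2_norm_eq_inner inner_vec_def)
  also have "\<dots> \<le> sqn n x" unfolding sqn_def
    using i by (intro member_le_sum[of i "{..<n}" "\<lambda>i. \<Sum>a\<in>UNIV. (x i $ a) * (x i $ a)"]) (auto intro: sum_nonneg)
  finally show ?thesis .
qed

lemma chi_bounds: "0 \<le> chi m n l x \<and> chi m n l x \<le> 1"
  unfolding chi_def by (intro psi_bounds) (simp add: sqn_nonneg)

lemma chi_supp:
  assumes "1 \<le> m"
  shows "supp_in n (real (Suc l)) (chi m n l)"
  unfolding supp_in_def
proof (intro ballI impI)
  fix x :: "'a cfg" assume x: "x \<in> conf n" "x \<notin> boxc n (real (Suc l))"
  then obtain i where i: "i < n" "norm (x i) > real (Suc l)" by (auto simp: boxc_def not_le)
  have "(real (Suc l))\<^sup>2 < (norm (x i))\<^sup>2" using i by (intro power_strict_mono) auto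
  also have "\<dots> \<le> sqn n x" using norm_sq_le_sqn[OF i(1)] .
  finally have "1 \<le> sqn n x * inverse ((real (Suc l))\<^sup>2)" by (simp add: field_simps)
  then show "chi m n l x = 0" unfolding chi_def using psi_zero assms by blast
qed

lemma chi_mono:
  assumes "l \<le> l'"
  shows "chi m n l x \<le> chi m n l' x"
  unfolding chi_def
proof (rule psi_mono)
  have "inverse ((real (Suc l'))\<^sup>2) \<le> inverse ((real (Suc l))\<^sup>2)"
    using assms by (intro le_imp_inverse_le power_mono) auto
  then show "sqn n x * inverse ((real (Suc l'))\<^sup>2) \<le> sqn n x * inverse ((real (Suc l))\<^sup>2)"
    by (intro mult_left_mono sqn_nonneg)
qed

lemma chi_lim: "(\<lambda>l. chi m n l x) \<longlonglongrightarrow> 1"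
proof -
  have "(\<lambda>l. inverse (real (Suc l))) \<longlonglongrightarrow> 0" by (rule LIMSEQ_inverse_real_of_nat)
  then have "(\<lambda>l. (inverse (real (Suc l)))\<^sup>2) \<longlonglongrightarrow> 0\<^sup>2" by (intro tendsto_intros)
  then have "(\<lambda>l. sqn n x * inverse ((real (Suc l))\<^sup>2)) \<longlonglongrightarrow> sqn n x * 0"
    by (intro tendsto_intros) (simp add: power_inverse)
  then have a: "(\<lambda>l. sqn n x * inverse ((real (Suc l))\<^sup>2)) \<longlonglongrightarrow> 0" by simp
  have "(\<lambda>l. psi m (sqn n x * inverse ((real (Suc l))\<^sup>2))) \<longlonglongrightarrow> psi m 0"
    by (rule continuous_on_tendsto_compose[OF psi_cont[of UNIV m] a]) simp_all
  then show ?thesis unfolding chi_def by simp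
qed

lemma Dk_nu:
  fixes nu :: "real^'d::finite \<Rightarrow> real"
  assumes "smooth_conf 1 (\<lambda>y::'d cfg. nu (y 0))" "i < n"
  shows "Dk r n (\<lambda>x::'d cfg. nu (x i))"
proof -
  define E where "E x = (\<lambda>j::nat. if j < 1 then x i else undefined)" for x :: "'d cfg"
  have "Dk r n (\<lambda>x. (\<lambda>y::'d cfg. nu (y 0)) (E x))"
  proof (rule Dk_map)
    show "\<forall>x\<in>conf n. E x \<in> conf 1" by (auto simp: E_def conf_iff)
    show "continuous_on (conf n) E" unfolding E_def
    proof (intro continuous_on_coordinatewise_then_product)
      fix j :: nat
      show "continuous_on (conf n) (\<lambda>x::'d cfg. if j < 1 then x i else undefined)"
        by (cases "j < 1") (simp_all add: continuous_on_subset[OF continuous_on_product_coordinates])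
    qed
    show "\<forall>p\<in>dirs n. (\<exists>q\<in>dirs 1. \<forall>x\<in>conf n. \<forall>t. E (pdir x p t) = pdir (E x) q t) \<or>
                (\<forall>x\<in>conf n. \<forall>t. E (pdir x p t) = E x)"
    proof
      fix p :: "nat \<times> 'd" assume "p \<in> dirs n"
      show "(\<exists>q\<in>dirs 1. \<forall>x\<in>conf n. \<forall>t. E (pdir x p t) = pdir (E x) q t) \<or>
                (\<forall>x\<in>conf n. \<forall>t. E (pdir x p t) = E x)"
      proof (cases "fst p = i")
        case True
        then have "\<forall>x\<in>conf n. \<forall>t. E (pdir x p t) = pdir (E x) (0, snd p) t"
          by (auto simp: E_def pdir_apply fun_eq_iff)
        then show ?thesis by (intro disjI1 bexI[of _ "(0, snd p)"]) auto
      next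
        case False
        then show ?thesis by (auto simp: E_def pdir_apply fun_eq_iff)
      qed
    qed
    show "Dk r 1 (\<lambda>y::'d cfg. nu (y 0))" using assms(1) smooth_conf_Dk by blast
  qed
  then show ?thesis by (simp add: E_def)
qed

lemma Dk_tensor_pow:
  assumes "smooth_conf 1 (\<lambda>y::'d::finite cfg. nu (y 0))"
  shows "Dk r n (tensor_pow nu n :: 'd cfg \<Rightarrow> real)"
  unfolding tensor_pow_def by (intro Dk_prod Dk_nu[OF assms]) auto

lemma pdir_upd: "fst p \<noteq> k \<Longrightarrow> pdir (x(k := v)) p t = (pdir x p t)(k := v)"
  by (auto simp: pdir_apply fun_eq_iff)

lemma iter_partial_upd:
  "set ps \<subseteq> dirs k \<Longrightarrow> iter_partial ps (\<lambda>x. g (x(k := v))) x = iter_partial ps g (x(k := v))"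
proof (induction ps arbitrary: x)
  case Nil then show ?case by simp
next
  case (Cons p ps)
  have "fst p \<noteq> k" "set ps \<subseteq> dirs k" using Cons.prems by auto
  then have "(\<lambda>t. iter_partial ps (\<lambda>x. g (x(k := v))) (pdir x p t)) = (\<lambda>t. iter_partial ps g ((pdir x p t)(k := v)))"
    by (intro ext Cons.IH)
  also have "\<dots> = (\<lambda>t. iter_partial ps g (pdir (x(k := v)) p t))"
    using \<open>fst p \<noteq> k\<close> by (simp add: pdir_upd)
  finally have "(\<lambda>t. iter_partial ps (\<lambda>x. g (x(k := v))) (pdir x p t)) = (\<lambda>t. iter_partial ps g (pdir (x(k := v)) p t))" .
  then show ?case by (simp only: iter_partial.simps partial_def)
qed

lemma upd_conf: "x \<in> conf k \<Longrightarrow> x(k := v) \<in> conf (Suc k)"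
  by (auto simp: conf_iff)

lemma Dk_upd:
  fixes g :: "'d::finite cfg \<Rightarrow> real"
  assumes "Dk r (Suc k) g"
  shows "Dk r k (\<lambda>x. g (x(k := v)))"
proof (rule Dk_map[OF _ _ _ assms])
  show "\<forall>x\<in>conf k. x(k := v) \<in> conf (Suc k)" using upd_conf by blast
  show "continuous_on (conf k) (\<lambda>x::'d cfg. x(k := v))"
  proof (intro continuous_on_coordinatewise_then_product)
    fix j :: nat
    show "continuous_on (conf k) (\<lambda>x::'d cfg. (x(k := v)) j)"
      by (cases "j = k") (simp_all add: continuous_on_subset[OF continuous_on_product_coordinates])
  qed
  show "\<forall>p\<in>dirs k. (\<exists>q\<in>dirs (Suc k). \<forall>x\<in>conf k. \<forall>t. (pdir x p t)(k := v) = pdir (x(k := v)) q t) \<or>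
                (\<forall>x\<in>conf k. \<forall>t. (pdir x p t)(k := v) = x(k := v))"
  proof (intro ballI disjI1)
    fix p :: "nat \<times> 'd" assume p: "p \<in> dirs k"
    show "\<exists>q\<in>dirs (Suc k). \<forall>x\<in>conf k. \<forall>t. (pdir x p t)(k := v) = pdir (x(k := v)) q t"
      by (rule bexI[of _ p]) (use p in \<open>auto simp: pdir_upd\<close>)
  qed
qed

lemma lebPi_Suc: "lebPi (Suc k) = PiM (insert k {..<k}) (\<lambda>_. lborel)"
  by (simp add: lebPi_def lessThan_Suc)

lemma PiM_sf: "finite I \<Longrightarrow> sigma_finite_measure (PiM I (\<lambda>_. lborel :: 'a::euclidean_space measure))"
  using product_sigma_finite.sigma_finite[OF psf] by blast

definition nM :: "nat \<Rightarrow> ('d::finite cfg \<Rightarrow> real) \<Rightarrow> nat \<Rightarrow> 'd cfg \<Rightarrow> ennreal" where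
  "nM N m j x = (\<integral>\<^sup>+ y. ennreal (m (merge {..<j} {j..<N} (x, y))) \<partial>PiM {j..<N} (\<lambda>_. lborel))"

lemma merge_conf: "j \<le> N \<Longrightarrow> merge {..<j} {j..<N} (x, y) \<in> conf N"
  by (auto simp: conf_iff merge_def)

lemma merge_meas2:
  fixes m :: "'d::finite cfg \<Rightarrow> real"
  assumes "m \<in> borel_measurable (lebPi N)" "j \<le> N"
  shows "(\<lambda>z. m (merge {..<j} {j..<N} z)) \<in> borel_measurable (PiM {..<j} (\<lambda>_. lborel) \<Otimes>\<^sub>M PiM {j..<N} (\<lambda>_. lborel))"
proof -
  have u: "{..<j} \<union> {j..<N} = {..<N}" using assms(2) by auto
  have "merge {..<j} {j..<N} \<in> measurable (PiM {..<j} (\<lambda>_. lborel) \<Otimes>\<^sub>M PiM {j..<N} (\<lambda>_. lborel)) (lebPi N :: 'd cfg measure)"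
    using measurable_merge[where I="{..<j}" and J="{j..<N}" and M="\<lambda>_. lborel"] unfolding lebPi_def u .
  from measurable_comp[OF this assms(1)] show ?thesis by (simp add: comp_def)
qed

lemma merge_meas1:
  fixes m :: "'d::finite cfg \<Rightarrow> real"
  assumes "m \<in> borel_measurable (lebPi N)" "j \<le> N" "x \<in> conf j"
  shows "(\<lambda>y. m (merge {..<j} {j..<N} (x, y))) \<in> borel_measurable (PiM {j..<N} (\<lambda>_. lborel))"
  using measurable_Pair2[OF merge_meas2[OF assms(1,2)], of x] assms(3)
  by (simp add: space_PiM conf_def)

lemma nM_meas:
  fixes m :: "'d::finite cfg \<Rightarrow> real"
  assumes "m \<in> borel_measurable (lebPi N)" "j \<le> N"
  shows "nM N m j \<in> borel_measurable (lebPi j)"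
proof -
  interpret S: sigma_finite_measure "PiM {j..<N} (\<lambda>_. lborel :: (real^'d) measure)"
    by (rule PiM_sf) simp
  show ?thesis unfolding nM_def lebPi_def
    by (rule S.borel_measurable_nn_integral) (use merge_meas2[OF assms] in simp)
qed

lemma marginal_enn:
  fixes m :: "'d::finite cfg \<Rightarrow> real"
  assumes "m \<in> borel_measurable (lebPi N)" "j \<le> N" "x \<in> conf j" "\<forall>z\<in>conf N. 0 \<le> m z"
  shows "marginal N m j x = enn2real (nM N m j x)"
  unfolding marginal_def nM_def
  by (rule integral_eq_nn_integral[OF merge_meas1[OF assms(1-3)]])
     (intro AE_I2, simp add: assms(4)[rule_format, OF merge_conf[OF assms(2)]])

lemma nM_total:
  fixes m :: "'d::finite cfg \<Rightarrow> real"
  assumes "m \<in> borel_measurable (lebPi N)" "j \<le> N"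
  shows "(\<integral>\<^sup>+ x. nM N m j x \<partial>lebPi j) = (\<integral>\<^sup>+ z. ennreal (m z) \<partial>lebPi N)"
proof -
  have u: "{..<j} \<union> {j..<N} = {..<N}" using assms(2) by auto
  have "(\<integral>\<^sup>+ z. ennreal (m z) \<partial>PiM ({..<j} \<union> {j..<N}) (\<lambda>_. lborel)) =
    (\<integral>\<^sup>+ x. \<integral>\<^sup>+ y. ennreal (m (merge {..<j} {j..<N} (x, y))) \<partial>PiM {j..<N} (\<lambda>_. lborel) \<partial>PiM {..<j} (\<lambda>_. lborel))"
  proof (rule product_sigma_finite.product_nn_integral_fold[OF psf])
    show "(\<lambda>z. ennreal (m z)) \<in> borel_measurable (PiM ({..<j} \<union> {j..<N}) (\<lambda>_. lborel))"
      unfolding u using measurable_compose[OF assms(1)[unfolded lebPi_def] measurable_ennreal] .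
  qed auto
  then show ?thesis unfolding nM_def lebPi_def u by simp
qed

lemma merge_upd:
  "k < N \<Longrightarrow> merge {..<k} {k..<N} (x, y(k := v)) = merge {..<Suc k} {Suc k..<N} (x(k := v), y)"
  by (auto simp: merge_def fun_eq_iff)

lemma nM_step:
  fixes m :: "'d::finite cfg \<Rightarrow> real"
  assumes "m \<in> borel_measurable (lebPi N)" "k < N" "x \<in> conf k"
  shows "nM N m k x = (\<integral>\<^sup>+ v. nM N m (Suc k) (x(k := v)) \<partial>lborel)"
proof -
  have ins: "{k..<N} = insert k {Suc k..<N}" using assms(2) by auto
  define h where "h y = ennreal (m (merge {..<k} {k..<N} (x, y)))" for y
  have me: "h \<in> borel_measurable (PiM (insert k {Suc k..<N}) (\<lambda>_. lborel))"
    unfolding h_def ins[symmetric] using merge_meas1[OF assms(1) _ assms(3)] assms(2) by simp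
  have "nM N m k x = integral\<^sup>N (PiM (insert k {Suc k..<N}) (\<lambda>_. lborel)) h"
    unfolding nM_def h_def ins[symmetric] ..
  also have "\<dots> = (\<integral>\<^sup>+ v. \<integral>\<^sup>+ y. h (y(k := v)) \<partial>PiM {Suc k..<N} (\<lambda>_. lborel) \<partial>lborel)"
    by (rule product_sigma_finite.product_nn_integral_insert_rev[OF psf _ _ me]) auto
  also have "\<dots> = (\<integral>\<^sup>+ v. nM N m (Suc k) (x(k := v)) \<partial>lborel)"
    unfolding nM_def h_def by (simp only: merge_upd[OF assms(2)])
  finally show ?thesis .
qed

lemma nM_upd_meas:
  fixes m :: "'d::finite cfg \<Rightarrow> real"
  assumes "m \<in> borel_measurable (lebPi N)" "Suc k \<le> N" "x \<in> conf k"
  shows "(\<lambda>v. nM N m (Suc k) (x(k := v))) \<in> borel_measurable lborel"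
proof -
  have "(\<lambda>v. x(k := v)) \<in> measurable lborel (lebPi (Suc k) :: 'd cfg measure)"
    unfolding lebPi_Suc using assms(3)
    by (intro measurable_component_update) (auto simp: space_PiM conf_def)
  from measurable_comp[OF this nM_meas[OF assms(1,2)]] show ?thesis by (simp add: comp_def)
qed

lemma marginal_step:
  fixes m :: "'d::finite cfg \<Rightarrow> real"
  assumes "m \<in> borel_measurable (lebPi N)" "k < N" "x \<in> conf k" "\<forall>z\<in>conf N. 0 \<le> m z"
    and fin: "nM N m k x \<noteq> \<infinity>"
  shows "marginal N m k x = (\<integral>v. marginal N m (Suc k) (x(k := v)) \<partial>lborel)"
proof -
  have me: "(\<lambda>v. nM N m (Suc k) (x(k := v))) \<in> borel_measurable lborel"
    using nM_upd_meas[OF assms(1) _ assms(3)] assms(2) by simp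
  have "(\<integral>v. marginal N m (Suc k) (x(k := v)) \<partial>lborel) = (\<integral>v. enn2real (nM N m (Suc k) (x(k := v))) \<partial>lborel)"
    using marginal_enn[OF assms(1) _ upd_conf[OF assms(3)] assms(4)] assms(2) by simp
  also have "\<dots> = enn2real (\<integral>\<^sup>+ v. ennreal (enn2real (nM N m (Suc k) (x(k := v)))) \<partial>lborel)"
    by (rule integral_eq_nn_integral) (use me in auto)
  also have "(\<integral>\<^sup>+ v. ennreal (enn2real (nM N m (Suc k) (x(k := v)))) \<partial>lborel) = (\<integral>\<^sup>+ v. nM N m (Suc k) (x(k := v)) \<partial>lborel)"
  proof (rule nn_integral_cong_AE)
    have "(\<integral>\<^sup>+ v. nM N m (Suc k) (x(k := v)) \<partial>lborel) \<noteq> \<infinity>"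
      using fin nM_step[OF assms(1-3)] by simp
    from nn_integral_PInf_AE[OF me this]
    show "AE v in lborel. ennreal (enn2real (nM N m (Suc k) (x(k := v)))) = nM N m (Suc k) (x(k := v))"
      by eventually_elim (simp add: less_top)
  qed
  also have "\<dots> = nM N m k x" using nM_step[OF assms(1-3)] by simp
  finally have "(\<integral>v. marginal N m (Suc k) (x(k := v)) \<partial>lborel) = enn2real (nM N m k x)" .
  moreover have "marginal N m k x = enn2real (nM N m k x)"
    using marginal_enn[OF assms(1) _ assms(3,4)] assms(2) by simp
  ultimately show ?thesis by simp
qed

lemma emeasure_PiM_space_ne0:
  assumes "finite I"
  shows "emeasure (PiM I (\<lambda>_. lborel :: 'a::euclidean_space measure)) (space (PiM I (\<lambda>_. lborel))) \<noteq> 0"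
proof -
  have "space (PiM I (\<lambda>_. lborel :: 'a measure)) = PiE I (\<lambda>_. UNIV)" by (simp add: space_PiM)
  moreover have "emeasure (PiM I (\<lambda>_. lborel :: 'a measure)) (PiE I (\<lambda>_. UNIV)) = (\<Prod>i\<in>I. emeasure lborel (UNIV :: 'a set))"
    by (rule product_sigma_finite.emeasure_PiM[OF psf assms]) simp
  moreover have "(\<Prod>i\<in>I. emeasure lborel (UNIV :: 'a set)) \<noteq> 0"
    using assms by (induction I rule: finite_induct) (simp_all add: ennreal_top_mult)
  ultimately show ?thesis by simp
qed

lemma nM_pos:
  fixes m :: "'d::finite cfg \<Rightarrow> real"
  assumes "m \<in> borel_measurable (lebPi N)" "j \<le> N" "x \<in> conf j" "\<forall>z\<in>conf N. 0 < m z"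
  shows "nM N m j x > 0"
proof (rule ccontr)
  assume "\<not> nM N m j x > 0"
  then have "nM N m j x = 0" by simp
  then have "AE y in PiM {j..<N} (\<lambda>_. lborel). ennreal (m (merge {..<j} {j..<N} (x, y))) = 0"
  proof -
    have me: "(\<lambda>y. ennreal (m (merge {..<j} {j..<N} (x, y)))) \<in> borel_measurable (PiM {j..<N} (\<lambda>_. lborel))"
      using measurable_compose[OF merge_meas1[OF assms(1-3)] measurable_ennreal] .
    show ?thesis using \<open>nM N m j x = 0\<close> unfolding nM_def nn_integral_0_iff_AE[OF me] .
  qed
  then have "AE y in PiM {j..<N} (\<lambda>_. lborel :: (real^'d) measure). False"
  proof (rule AE_mp)
    show "AE y in PiM {j..<N} (\<lambda>_. lborel :: (real^'d) measure). ennreal (m (merge {..<j} {j..<N} (x, y))) = 0 \<longrightarrow> False"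
    proof (rule AE_I2)
      fix y :: "'d cfg"
      have "m (merge {..<j} {j..<N} (x, y)) > 0" using assms(2,4) merge_conf by blast
      then show "ennreal (m (merge {..<j} {j..<N} (x, y))) = 0 \<longrightarrow> False" by simp
    qed
  qed
  then have "emeasure (PiM {j..<N} (\<lambda>_. lborel :: (real^'d) measure)) (space (PiM {j..<N} (\<lambda>_. lborel))) = 0"
    using AE_iff_measurable[of "space (PiM {j..<N} (\<lambda>_. lborel :: (real^'d) measure))" "PiM {j..<N} (\<lambda>_. lborel)" "\<lambda>_. False"]
    by simp
  then show False using emeasure_PiM_space_ne0[of "{j..<N}", where 'a="real^'d"] by simp
qed

lemma AE_nM_fin:
  fixes m :: "'d::finite cfg \<Rightarrow> real"
  assumes "m \<in> borel_measurable (lebPi N)" "j \<le> N" "(\<integral>\<^sup>+ z. ennreal (m z) \<partial>lebPi N) = 1"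
  shows "AE x in lebPi j. nM N m j x \<noteq> \<infinity>"
  by (rule nn_integral_PInf_AE[OF nM_meas[OF assms(1,2)]]) (use nM_total[OF assms(1,2)] assms(3) in simp)

lemma marginal_nonneg:
  fixes m :: "'d::finite cfg \<Rightarrow> real"
  assumes "m \<in> borel_measurable (lebPi N)" "j \<le> N" "x \<in> conf j" "\<forall>z\<in>conf N. 0 \<le> m z"
  shows "0 \<le> marginal N m j x"
  using marginal_enn[OF assms] by simp

lemma AE_marginal_pos:
  fixes m :: "'d::finite cfg \<Rightarrow> real"
  assumes "m \<in> borel_measurable (lebPi N)" "j \<le> N" "\<forall>z\<in>conf N. 0 < m z" "(\<integral>\<^sup>+ z. ennreal (m z) \<partial>lebPi N) = 1"
  shows "AE x in lebPi j. marginal N m j x > 0"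
  using AE_nM_fin[OF assms(1,2,4)]
proof (rule AE_mp, intro AE_I2 impI)
  fix x :: "'d cfg" assume x: "x \<in> space (lebPi j)" and f: "nM N m j x \<noteq> \<infinity>"
  have p: "nM N m j x > 0" using nM_pos[OF assms(1,2) _ assms(3)] x by simp
  have "marginal N m j x = enn2real (nM N m j x)"
    using marginal_enn[OF assms(1,2)] x assms(3) by (simp add: less_imp_le)
  then show "marginal N m j x > 0" using p f by (simp add: enn2real_positive_iff less_top)
qed

lemma nn_marginal_le:
  fixes m :: "'d::finite cfg \<Rightarrow> real"
  assumes "m \<in> borel_measurable (lebPi N)" "j \<le> N" "\<forall>z\<in>conf N. 0 \<le> m z" "(\<integral>\<^sup>+ z. ennreal (m z) \<partial>lebPi N) = 1"
  shows "(\<integral>\<^sup>+ x. ennreal (marginal N m j x) \<partial>lebPi j) \<le> 1"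
proof -
  have "(\<integral>\<^sup>+ x. ennreal (marginal N m j x) \<partial>lebPi j) \<le> (\<integral>\<^sup>+ x. nM N m j x \<partial>lebPi j)"
  proof (rule nn_integral_mono)
    fix x :: "'d cfg" assume "x \<in> space (lebPi j)"
    then have "marginal N m j x = enn2real (nM N m j x)" using marginal_enn[OF assms(1,2) _ assms(3)] by simp
    then show "ennreal (marginal N m j x) \<le> nM N m j x" by (simp add: ennreal_enn2real_if)
  qed
  then show ?thesis using nM_total[OF assms(1,2)] assms(4) by simp
qed

lemma supp_iter:
  fixes G :: "'d::finite cfg \<Rightarrow> real"
  assumes "Dk (length ps) n G" "supp_in n R G" "set ps \<subseteq> dirs n"
  shows "supp_in n R (iter_partial ps G)"
  using assms
proof (induction ps)
  case Nil then show ?case by simp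
next
  case (Cons p ps)
  have "Dk (Suc 0 + length ps) n G" using Cons.prems by simp
  then have d: "Dk (Suc 0) n (iter_partial ps G)" using Dk_iter[of "Suc 0" ps n G] Cons.prems by simp
  have "supp_in n R (iter_partial ps G)" using Cons Dk_mono by fastforce
  then show ?case using supp_partial[OF Dk_mono[OF d] _] Cons.prems by simp
qed

lemma supp_mult: "supp_in n R g \<Longrightarrow> supp_in n R (\<lambda>x. g x * h x)"
  by (simp add: supp_in_def)

lemma supp_mult2: "supp_in n R h \<Longrightarrow> supp_in n R (\<lambda>x. g x * h x)"
  by (simp add: supp_in_def)

lemma upd_meas_pair:
  "(\<lambda>z. (snd z)(k := fst z)) \<in> measurable (lborel \<Otimes>\<^sub>M lebPi k) (lebPi (Suc k) :: 'd::finite cfg measure)"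
  unfolding lebPi_Suc
  by (rule measurable_fun_upd[where J = "{..<k}"]) (auto simp: lebPi_def)

lemma upd_meas_pair':
  "(\<lambda>z. (fst z)(k := snd z)) \<in> measurable (lebPi k \<Otimes>\<^sub>M lborel) (lebPi (Suc k) :: 'd::finite cfg measure)"
  unfolding lebPi_Suc
  by (rule measurable_fun_upd[where J = "{..<k}"]) (auto simp: lebPi_def)

lemma upd_meas_x:
  "(\<lambda>x. x(k := v)) \<in> measurable (lebPi k) (lebPi (Suc k) :: 'd::finite cfg measure)"
  unfolding lebPi_Suc
  by (rule measurable_fun_upd[where J = "{..<k}"]) (auto simp: lebPi_def)

lemma sf_lebPi: "sigma_finite_measure (lebPi k :: 'd::finite cfg measure)"
  unfolding lebPi_def by (rule PiM_sf) simp

lemma psf_pair: "pair_sigma_finite (lebPi k :: 'd::finite cfg measure) lborel"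
  by (simp add: pair_sigma_finite_def sf_lebPi lborel.sigma_finite_measure_axioms)

lemma psf_pair': "pair_sigma_finite lborel (lebPi k :: 'd::finite cfg measure)"
  by (simp add: pair_sigma_finite_def sf_lebPi lborel.sigma_finite_measure_axioms)

lemma nn_lebPi_Suc:
  fixes h :: "'d::finite cfg \<Rightarrow> ennreal"
  assumes "h \<in> borel_measurable (lebPi (Suc k))"
  shows "(\<integral>\<^sup>+ z. h z \<partial>lebPi (Suc k)) = (\<integral>\<^sup>+ v. \<integral>\<^sup>+ x. h (x(k := v)) \<partial>lebPi k \<partial>lborel)"
    and "(\<integral>\<^sup>+ z. h z \<partial>lebPi (Suc k)) = (\<integral>\<^sup>+ x. \<integral>\<^sup>+ v. h (x(k := v)) \<partial>lborel \<partial>lebPi k)"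
  using product_sigma_finite.product_nn_integral_insert_rev[OF psf, of "{..<k}" k h]
    product_sigma_finite.product_nn_integral_insert[OF psf, of "{..<k}" k h] assms
  by (simp_all add: lebPi_Suc) (simp_all add: lebPi_def)

lemma int_le_nn:
  fixes g :: "'a \<Rightarrow> real"
  assumes "integrable M g" "AE x in M. ennreal (g x) \<le> G x"
  shows "ennreal (integral\<^sup>L M g) \<le> (\<integral>\<^sup>+ x. G x \<partial>M)"
proof -
  have "integral\<^sup>L M g \<le> integral\<^sup>L M (\<lambda>x. max 0 (g x))"
    using assms(1) by (intro integral_mono) auto
  then have "ennreal (integral\<^sup>L M g) \<le> ennreal (integral\<^sup>L M (\<lambda>x. max 0 (g x)))"
    by (rule ennreal_leI)
  also have "\<dots> = (\<integral>\<^sup>+ x. ennreal (max 0 (g x)) \<partial>M)"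
    using assms(1) by (intro nn_integral_eq_integral[symmetric]) auto
  also have "\<dots> \<le> (\<integral>\<^sup>+ x. G x \<partial>M)"
    using assms(2) by (intro nn_integral_mono_AE) (auto elim!: eventually_mono simp: ennreal_max_0)
  finally show ?thesis .
qed

locale setting =
  fixes N :: nat and m :: "'d::finite cfg \<Rightarrow> real" and nu :: "real^'d \<Rightarrow> real" and k :: nat
  assumes mdens: "smooth_pos_density N m"
    and nudens: "smooth_pos_density_Rd nu"
    and msm: "\<And>j. 1 \<le> j \<Longrightarrow> j \<le> N \<Longrightarrow> smooth_conf j (marginal N m j)"
    and k1: "1 \<le> k" and kN: "Suc k \<le> N"
begin

abbreviation "M j \<equiv> marginal N m j"
abbreviation "T j \<equiv> tensor_pow nu j"
abbreviation "f j \<equiv> ratio N m nu j"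

lemma m_meas: "m \<in> borel_measurable (lebPi N)" using mdens by (simp add: smooth_pos_density_def)
lemma m_pos: "\<forall>z\<in>conf N. 0 < m z" using mdens by (simp add: smooth_pos_density_def)
lemma m_nonneg: "\<forall>z\<in>conf N. 0 \<le> m z" using m_pos by (simp add: less_imp_le)
lemma m_one: "(\<integral>\<^sup>+ z. ennreal (m z) \<partial>lebPi N) = 1" using mdens by (simp add: smooth_pos_density_def)
lemma nu_pos: "0 < nu v" using nudens by (simp add: smooth_pos_density_Rd_def)
lemma nu_meas: "nu \<in> borel_measurable lborel" using nudens by (simp add: smooth_pos_density_Rd_def)
lemma nu_sm: "smooth_conf 1 (\<lambda>y::'d cfg. nu (y 0))" using nudens by (simp add: smooth_pos_density_Rd_def)

lemma T_pos: "0 < T j x"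
  unfolding tensor_pow_def using nu_pos by (intro prod_pos) auto

lemma Dk_T: "Dk r j (T j)"
  by (rule Dk_tensor_pow[OF nu_sm])

lemma Dk_M: "1 \<le> j \<Longrightarrow> j \<le> N \<Longrightarrow> Dk r j (M j)"
  using msm smooth_conf_Dk by blast

lemma open_pos: "open {y::real. - e < y}"
  by (simp add: open_Collect_less)

lemma Dk_f: assumes "1 \<le> j" "j \<le> N" shows "Dk r j (f j)"
proof -
  have inv: "Dk r j (\<lambda>x. 1 / (T j x + 0) ^ 1)"
    by (rule Dk_comp[OF open_pos hD_inv Dk_T]) (auto simp: T_pos)
  have "Dk r j (\<lambda>x. M j x * (1 / (T j x + 0) ^ 1))"
    by (rule Dk_mult[OF Dk_M[OF assms] inv])
  then show ?thesis by (rule Dk_cong) (simp add: ratio_def)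
qed

lemma M_nonneg: "j \<le> N \<Longrightarrow> x \<in> conf j \<Longrightarrow> 0 \<le> M j x"
  using marginal_nonneg[OF m_meas _ _ m_nonneg] by blast

lemma f_nonneg: "j \<le> N \<Longrightarrow> x \<in> conf j \<Longrightarrow> 0 \<le> f j x"
  using M_nonneg T_pos by (simp add: ratio_def less_imp_le)

lemma T_upd: "T (Suc k) (x(k := v)) = T k x * nu v"
proof -
  have "(\<Prod>i<k. nu ((x(k := v)) i)) = (\<Prod>i<k. nu (x i))" by (rule prod.cong) auto
  then show ?thesis unfolding tensor_pow_def by (simp add: lessThan_Suc mult.commute)
qed

lemma f_upd: "f (Suc k) (x(k := v)) = M (Suc k) (x(k := v)) / (T k x * nu v)"
  by (simp add: ratio_def T_upd)

lemma kN': "k < N" using kN by simp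

lemma cont_M1: "continuous_on (conf (Suc k)) (M (Suc k))"
  using Dk_cont[OF Dk_M[of "Suc k" 0]] kN by simp

lemma meas_M1: "M (Suc k) \<in> borel_measurable (lebPi (Suc k))"
  by (rule cont_meas[OF cont_M1])

lemma AE_Mstep: "AE x in lebPi k. M k x = (\<integral>v. M (Suc k) (x(k := v)) \<partial>lborel)"
proof -
  have A: "AE x in lebPi k. nM N m k x \<noteq> \<infinity>" using AE_nM_fin[OF m_meas _ m_one, of k] kN by simp
  show ?thesis using A
  proof (rule AE_mp)
    show "AE x in lebPi k. nM N m k x \<noteq> \<infinity> \<longrightarrow> M k x = (\<integral>v. M (Suc k) (x(k := v)) \<partial>lborel)"
    proof (rule AE_I2, rule impI)
      fix x :: "'d cfg" assume x: "x \<in> space (lebPi k)" and fin: "nM N m k x \<noteq> \<infinity>"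
      show "M k x = (\<integral>v. M (Suc k) (x(k := v)) \<partial>lborel)"
        using marginal_step[OF m_meas kN' _ m_nonneg fin] x by simp
    qed
  qed
qed

lemma AE_pos_sec: "AE v in lborel. AE x in lebPi k. 0 < M (Suc k) (x(k := v))"
proof -
  define S where "S = {z \<in> space (lebPi (Suc k)). \<not> 0 < M (Suc k) z}"
  have S: "S \<in> sets (lebPi (Suc k))" unfolding S_def using meas_M1 by measurable
  have "emeasure (lebPi (Suc k)) S = 0"
    using AE_marginal_pos[OF m_meas kN m_pos m_one] AE_iff_measurable[OF S] S_def by simp
  then have "(\<integral>\<^sup>+ z. indicator S z \<partial>lebPi (Suc k)) = 0" using S by simp
  then have z: "(\<integral>\<^sup>+ v. \<integral>\<^sup>+ x. indicator S (x(k := v)) \<partial>lebPi k \<partial>lborel) = 0"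
    using nn_lebPi_Suc(1)[where h="indicator S" and k=k] S by simp
  have mpair: "(\<lambda>z. indicator S ((snd z)(k := fst z)) :: ennreal) \<in> borel_measurable (lborel \<Otimes>\<^sub>M lebPi k)"
    using measurable_compose[OF upd_meas_pair borel_measurable_indicator[OF S]] .
  have mv: "(\<lambda>v. \<integral>\<^sup>+ x. indicator S (x(k := v)) \<partial>lebPi k) \<in> borel_measurable lborel"
    using sigma_finite_measure.borel_measurable_nn_integral[OF sf_lebPi, of "\<lambda>v x. indicator S (x(k := v))" lborel] mpair
    by (simp add: split_beta')
  have "AE v in lborel. (\<integral>\<^sup>+ x. indicator S (x(k := v)) \<partial>lebPi k) = 0"
    using z nn_integral_0_iff_AE[OF mv] by simp
  then show ?thesis
  proof (rule AE_mp)
    show "AE v in lborel. (\<integral>\<^sup>+ x. indicator S (x(k := v)) \<partial>lebPi k) = 0 \<longrightarrow> (AE x in lebPi k. 0 < M (Suc k) (x(k := v)))"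
    proof (rule AE_I2, rule impI)
      fix v :: "real^'d" assume "(\<integral>\<^sup>+ x. indicator S (x(k := v)) \<partial>lebPi k) = 0"
      moreover have "(\<lambda>x. indicator S (x(k := v)) :: ennreal) \<in> borel_measurable (lebPi k)"
        using measurable_compose[OF upd_meas_x borel_measurable_indicator[OF S]] .
      ultimately have "AE x in lebPi k. (indicator S (x(k := v)) :: ennreal) = 0"
        using nn_integral_0_iff_AE by blast
      then show "AE x in lebPi k. 0 < M (Suc k) (x(k := v))"
      proof (rule AE_mp)
        show "AE x in lebPi k. (indicator S (x(k := v)) :: ennreal) = 0 \<longrightarrow> 0 < M (Suc k) (x(k := v))"
        proof (rule AE_I2, rule impI)
          fix x :: "'d cfg" assume "x \<in> space (lebPi k)" "(indicator S (x(k := v)) :: ennreal) = 0"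
          then show "0 < M (Suc k) (x(k := v))" using upd_conf[of x k v] by (auto simp: S_def indicator_def split: if_splits)
        qed
      qed
    qed
  qed
qed

end

context setting begin

lemma Dk_f1: "Dk r (Suc k) (f (Suc k))" using Dk_f kN by simp
lemma Dk_fk: "Dk r k (f k)" using Dk_f k1 kN by simp
lemma cont_T: "continuous_on (conf k) (T k)" using Dk_cont[OF Dk_T] .
lemma cont_fk: "continuous_on (conf k) (f k)" using Dk_cont[OF Dk_fk] .

lemma cont_sec: "continuous_on (conf k) (\<lambda>x. f (Suc k) (x(k := v)))"
  using Dk_cont[OF Dk_upd[OF Dk_f1]] .

lemma M1_nonneg: "x \<in> conf k \<Longrightarrow> 0 \<le> M (Suc k) (x(k := v))"
  using M_nonneg[OF kN upd_conf] by blast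

lemma fub:
  fixes B :: "'d cfg \<Rightarrow> real"
  assumes cB: "continuous_on (conf k) B" and sB: "supp_in k R B"
  shows "(\<integral>x. B x * f k x \<partial>lebPi k) = (\<integral>v. nu v * (\<integral>x. B x * f (Suc k) (x(k := v)) \<partial>lebPi k) \<partial>lborel)"
    and "integrable lborel (\<lambda>v. nu v * (\<integral>x. B x * f (Suc k) (x(k := v)) \<partial>lebPi k))"
proof -
  interpret P: pair_sigma_finite "lebPi k :: 'd cfg measure" lborel by (rule psf_pair)
  interpret L: sigma_finite_measure "lborel :: (real^'d) measure" by (rule lborel.sigma_finite_measure_axioms)
  define g where "g x v = B x / T k x * M (Suc k) (x(k := v))" for x v
  have cBT: "continuous_on (conf k) (\<lambda>x. B x / T k x)"
    using cB cont_T T_pos by (intro continuous_intros) (auto simp: less_imp_neq[symmetric])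
  obtain C where C: "\<forall>x\<in>boxc k R. \<bar>B x / T k x\<bar> \<le> C" using cont_bounded_box[OF cBT] by blast
  have mBT: "(\<lambda>x. B x / T k x) \<in> borel_measurable (lebPi k)" by (rule cont_meas[OF cBT])
  have mM1: "(\<lambda>z. M (Suc k) ((fst z)(k := snd z))) \<in> borel_measurable (lebPi k \<Otimes>\<^sub>M lborel)"
    using measurable_compose[OF upd_meas_pair' meas_M1] .
  have mg: "(\<lambda>z. g (fst z) (snd z)) \<in> borel_measurable (lebPi k \<Otimes>\<^sub>M lborel)"
    unfolding g_def by (intro borel_measurable_times mM1 measurable_compose[OF measurable_fst mBT])
  have mg': "case_prod g \<in> borel_measurable (lebPi k \<Otimes>\<^sub>M lborel)"
    using mg by (simp add: split_beta')
  have bnd: "ennreal (norm (g x v)) \<le> ennreal (\<bar>C\<bar> * M (Suc k) (x(k := v)))" if x: "x \<in> conf k" for x v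
  proof -
    have "norm (g x v) \<le> \<bar>C\<bar> * M (Suc k) (x(k := v))"
    proof (cases "x \<in> boxc k R")
      case True
      then have "\<bar>B x / T k x\<bar> \<le> \<bar>C\<bar>" using C by fastforce
      then have "\<bar>B x / T k x\<bar> * M (Suc k) (x(k := v)) \<le> \<bar>C\<bar> * M (Suc k) (x(k := v))"
        using M1_nonneg[OF x, of v] by (rule mult_right_mono)
      then show ?thesis unfolding g_def using M1_nonneg[OF x, of v]
        by (simp add: abs_mult)
    next
      case False
      then have "B x = 0" using sB x by (simp add: supp_in_def)
      then show ?thesis unfolding g_def using M1_nonneg[OF x, of v] by simp
    qed
    then show ?thesis by (rule ennreal_leI)
  qed
  have mM1v: "(\<lambda>v. ennreal (M (Suc k) (x(k := v)))) \<in> borel_measurable lborel" if "x \<in> conf k" for x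
    using measurable_compose[OF measurable_Pair2[OF mM1, of x] measurable_ennreal] that by simp
  have "(\<integral>\<^sup>+ z. ennreal (norm (case_prod g z)) \<partial>(lebPi k \<Otimes>\<^sub>M lborel)) =
      (\<integral>\<^sup>+ x. \<integral>\<^sup>+ v. ennreal (norm (g x v)) \<partial>lborel \<partial>lebPi k)"
    using lborel.nn_integral_fst[of "\<lambda>z. ennreal (norm (case_prod g z))" "lebPi k"] mg' by simp
  also have "\<dots> \<le> (\<integral>\<^sup>+ x. \<integral>\<^sup>+ v. ennreal (\<bar>C\<bar> * M (Suc k) (x(k := v))) \<partial>lborel \<partial>lebPi k)"
    using bnd by (intro nn_integral_mono) (auto intro!: nn_integral_mono)
  also have "\<dots> = (\<integral>\<^sup>+ x. ennreal \<bar>C\<bar> * \<integral>\<^sup>+ v. ennreal (M (Suc k) (x(k := v))) \<partial>lborel \<partial>lebPi k)"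
  proof (intro nn_integral_cong)
    fix x :: "'d cfg" assume x: "x \<in> space (lebPi k)"
    have "(\<integral>\<^sup>+ v. ennreal (\<bar>C\<bar> * M (Suc k) (x(k := v))) \<partial>lborel) = (\<integral>\<^sup>+ v. ennreal \<bar>C\<bar> * ennreal (M (Suc k) (x(k := v))) \<partial>lborel)"
      by (rule nn_integral_cong) (use x M1_nonneg in \<open>simp add: ennreal_mult\<close>)
    also have "\<dots> = ennreal \<bar>C\<bar> * (\<integral>\<^sup>+ v. ennreal (M (Suc k) (x(k := v))) \<partial>lborel)"
      by (rule nn_integral_cmult) (use x mM1v in simp)
    finally show "(\<integral>\<^sup>+ v. ennreal (\<bar>C\<bar> * M (Suc k) (x(k := v))) \<partial>lborel) = ennreal \<bar>C\<bar> * (\<integral>\<^sup>+ v. ennreal (M (Suc k) (x(k := v))) \<partial>lborel)" .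
  qed
  also have "\<dots> = ennreal \<bar>C\<bar> * (\<integral>\<^sup>+ x. \<integral>\<^sup>+ v. ennreal (M (Suc k) (x(k := v))) \<partial>lborel \<partial>lebPi k)"
  proof (rule nn_integral_cmult)
    show "(\<lambda>x. \<integral>\<^sup>+ v. ennreal (M (Suc k) (x(k := v))) \<partial>lborel) \<in> borel_measurable (lebPi k)"
      using lborel.borel_measurable_nn_integral[of "\<lambda>x v. ennreal (M (Suc k) (x(k := v)))" "lebPi k"]
        measurable_compose[OF mM1 measurable_ennreal] by (simp add: split_beta')
  qed
  also have "(\<integral>\<^sup>+ x. \<integral>\<^sup>+ v. ennreal (M (Suc k) (x(k := v))) \<partial>lborel \<partial>lebPi k) = (\<integral>\<^sup>+ z. ennreal (M (Suc k) z) \<partial>lebPi (Suc k))"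
    using nn_lebPi_Suc(2)[where h = "\<lambda>z. ennreal (M (Suc k) z)" and k = k] meas_M1 by simp
  also have "\<dots> \<le> 1" by (rule nn_marginal_le[OF m_meas kN m_nonneg m_one])
  finally have "(\<integral>\<^sup>+ z. ennreal (norm (case_prod g z)) \<partial>(lebPi k \<Otimes>\<^sub>M lborel)) \<le> ennreal \<bar>C\<bar> * 1"
    by (simp add: mult_left_mono)
  then have "(\<integral>\<^sup>+ z. ennreal (norm (case_prod g z)) \<partial>(lebPi k \<Otimes>\<^sub>M lborel)) < \<infinity>"
    using le_less_trans[OF _ ennreal_less_top] by simp
  then have intg: "integrable (lebPi k \<Otimes>\<^sub>M lborel) (case_prod g)"
    unfolding integrable_iff_bounded using mg' by simp
  have e1: "(\<integral>x. B x * f k x \<partial>lebPi k) = (\<integral>x. (\<integral>v. g x v \<partial>lborel) \<partial>lebPi k)"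
  proof (rule integral_cong_AE)
    show "(\<lambda>x. B x * f k x) \<in> borel_measurable (lebPi k)"
      by (intro cont_meas continuous_intros cB cont_fk)
    show "(\<lambda>x. \<integral>v. g x v \<partial>lborel) \<in> borel_measurable (lebPi k)"
      by (rule lborel.borel_measurable_lebesgue_integral[OF mg'])
    show "AE x in lebPi k. B x * f k x = (\<integral>v. g x v \<partial>lborel)"
      using AE_Mstep
    proof (rule AE_mp)
      show "AE x in lebPi k. M k x = (\<integral>v. M (Suc k) (x(k := v)) \<partial>lborel) \<longrightarrow> B x * f k x = (\<integral>v. g x v \<partial>lborel)"
      proof (rule AE_I2, rule impI)
        fix x :: "'d cfg" assume "M k x = (\<integral>v. M (Suc k) (x(k := v)) \<partial>lborel)"
        then show "B x * f k x = (\<integral>v. g x v \<partial>lborel)" unfolding g_def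
          by (simp add: ratio_def)
      qed
    qed
  qed
  have e2: "(\<integral>x. (\<integral>v. g x v \<partial>lborel) \<partial>lebPi k) = (\<integral>v. (\<integral>x. g x v \<partial>lebPi k) \<partial>lborel)"
    by (rule P.Fubini_integral[OF intg, symmetric])
  have e3: "(\<integral>x. g x v \<partial>lebPi k) = nu v * (\<integral>x. B x * f (Suc k) (x(k := v)) \<partial>lebPi k)" for v
  proof -
    have "(\<integral>x. g x v \<partial>lebPi k) = (\<integral>x. nu v * (B x * f (Suc k) (x(k := v))) \<partial>lebPi k)"
    proof (rule Bochner_Integration.integral_cong[OF refl])
      fix x :: "'d cfg" assume "x \<in> space (lebPi k)"
      have "T k x \<noteq> 0" "nu v \<noteq> 0" using T_pos[of k x] nu_pos[of v] by auto
      then show "g x v = nu v * (B x * f (Suc k) (x(k := v)))"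
        unfolding g_def f_upd by (simp add: field_simps)
    qed
    then show ?thesis by simp
  qed
  show "(\<integral>x. B x * f k x \<partial>lebPi k) = (\<integral>v. nu v * (\<integral>x. B x * f (Suc k) (x(k := v)) \<partial>lebPi k) \<partial>lborel)"
    using e1 e2 e3 by simp
  have "integrable lborel (\<lambda>v. \<integral>x. g x v \<partial>lebPi k)" by (rule P.integrable_snd[OF intg])
  then show "integrable lborel (\<lambda>v. nu v * (\<integral>x. B x * f (Suc k) (x(k := v)) \<partial>lebPi k))"
    using e3 by simp
qed

end

context setting begin

lemma integrable_cs:
  fixes g :: "'d cfg \<Rightarrow> real"
  shows "continuous_on (conf k) g \<Longrightarrow> supp_in k R g \<Longrightarrow> integrable (lebPi k) g"
  by (rule integrable_supp)

lemma iter_sec: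
  "set ps \<subseteq> dirs k \<Longrightarrow> iter_partial ps (f (Suc k)) (x(k := v)) = iter_partial ps (\<lambda>x. f (Suc k) (x(k := v))) x"
  by (rule iter_partial_upd[symmetric])

lemma cont_iter_sec:
  assumes "set ps \<subseteq> dirs k"
  shows "continuous_on (conf k) (\<lambda>x. iter_partial ps (f (Suc k)) (x(k := v)))"
proof -
  have "Dk 0 k (iter_partial ps (\<lambda>x. f (Suc k) (x(k := v))))"
    using Dk_iter[of 0 ps k] Dk_upd[OF Dk_f1] assms by simp
  then show ?thesis using Dk_cont iter_sec[OF assms] by simp
qed

lemma cont_iter_k:
  assumes "set ps \<subseteq> dirs k"
  shows "continuous_on (conf k) (iter_partial ps (f k))"
  using Dk_cont[OF Dk_iter[of 0 ps k "f k"]] Dk_fk assms by simp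

lemma phi_id:
  fixes w :: "'d cfg \<Rightarrow> real"
  assumes w: "Dk (length ps) k w" and sw: "supp_in k R w" and ps: "set ps \<subseteq> dirs k"
  defines "Psi v \<equiv> (\<integral>x. 2 * w x * iter_partial ps (f (Suc k)) (x(k := v)) - (w x)\<^sup>2 / T k x * f (Suc k) (x(k := v)) \<partial>lebPi k)"
  shows "(\<integral>x. 2 * w x * iter_partial ps (f k) x - (w x)\<^sup>2 / T k x * f k x \<partial>lebPi k) = (\<integral>v. nu v * Psi v \<partial>lborel)"
    and "integrable lborel (\<lambda>v. nu v * Psi v)"
proof -
  let ?j = "length ps"
  define A where "A = iter_partial (rev ps) w"
  define W where "W x = (w x)\<^sup>2 / T k x" for x
  have cw: "continuous_on (conf k) w" using Dk_cont[OF w] .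
  have cA: "continuous_on (conf k) A"
    unfolding A_def using Dk_cont[OF Dk_iter[of 0 "rev ps" k w]] w ps by simp
  have sA: "supp_in k R A" unfolding A_def using supp_iter[of "rev ps" k w R] w sw ps by simp
  have cW: "continuous_on (conf k) W" unfolding W_def
    using cw cont_T T_pos by (intro continuous_intros) (auto simp: less_imp_neq[symmetric])
  have sW: "supp_in k R W" using sw by (simp add: supp_in_def W_def)
  have ca: "continuous_on (conf k) (iter_partial ps (f k))" by (rule cont_iter_k[OF ps])
  have int1: "integrable (lebPi k) (\<lambda>x. w x * iter_partial ps (f k) x)"
    by (rule integrable_cs[OF _ supp_mult[OF sw]]) (intro continuous_intros cw ca)
  have int2: "integrable (lebPi k) (\<lambda>x. W x * f k x)"
    by (rule integrable_cs[OF _ supp_mult[OF sW]]) (intro continuous_intros cW cont_fk)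
  have E1: "(\<integral>x. w x * iter_partial ps (f k) x \<partial>lebPi k) = (-1) ^ ?j * (\<integral>x. A x * f k x \<partial>lebPi k)"
    unfolding A_def by (rule ibp_iter[OF ps Dk_fk w sw])
  have E2: "(\<integral>x. w x * iter_partial ps (f (Suc k)) (x(k := v)) \<partial>lebPi k) = (-1) ^ ?j * (\<integral>x. A x * f (Suc k) (x(k := v)) \<partial>lebPi k)" for v
  proof -
    have "(\<integral>x. w x * iter_partial ps (\<lambda>x. f (Suc k) (x(k := v))) x \<partial>lebPi k) = (-1) ^ ?j * (\<integral>x. A x * f (Suc k) (x(k := v)) \<partial>lebPi k)"
      unfolding A_def by (rule ibp_iter[OF ps Dk_upd[OF Dk_f1] w sw])
    then show ?thesis using iter_sec[OF ps] by simp
  qed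
  have int3: "integrable (lebPi k) (\<lambda>x. w x * iter_partial ps (f (Suc k)) (x(k := v)))" for v
    by (rule integrable_cs[OF _ supp_mult[OF sw]]) (intro continuous_intros cw cont_iter_sec[OF ps])
  have int4: "integrable (lebPi k) (\<lambda>x. W x * f (Suc k) (x(k := v)))" for v
    by (rule integrable_cs[OF _ supp_mult[OF sW]]) (intro continuous_intros cW cont_sec)
  note FA = fub[OF cA sA] and FW = fub[OF cW sW]
  define IA where "IA v = (\<integral>x. A x * f (Suc k) (x(k := v)) \<partial>lebPi k)" for v
  define IW where "IW v = (\<integral>x. W x * f (Suc k) (x(k := v)) \<partial>lebPi k)" for v
  have pv: "nu v * Psi v = 2 * (-1) ^ ?j * (nu v * IA v) - nu v * IW v" for v
  proof -
    have "Psi v = 2 * (\<integral>x. w x * iter_partial ps (f (Suc k)) (x(k := v)) \<partial>lebPi k) - IW v"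
      unfolding Psi_def IW_def W_def using int3[of v] int4[of v]
      by (simp add: W_def mult.assoc)
    then have eq: "Psi v = 2 * (-1) ^ ?j * IA v - IW v" using E2[of v] by (simp add: IA_def)
    show ?thesis unfolding eq by (simp add: algebra_simps)
  qed
  have "(\<integral>x. 2 * w x * iter_partial ps (f k) x - (w x)\<^sup>2 / T k x * f k x \<partial>lebPi k)
      = 2 * (\<integral>x. w x * iter_partial ps (f k) x \<partial>lebPi k) - (\<integral>x. W x * f k x \<partial>lebPi k)"
    using int1 int2 by (simp add: W_def mult.assoc)
  also have "\<dots> = 2 * (-1) ^ ?j * (\<integral>v. nu v * IA v \<partial>lborel) - (\<integral>v. nu v * IW v \<partial>lborel)"
    using E1 FA(1) FW(1) by (simp add: IA_def IW_def)
  also have "\<dots> = (\<integral>v. 2 * (-1) ^ ?j * (nu v * IA v) - nu v * IW v \<partial>lborel)"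
    using FA(2) FW(2) by (simp add: IA_def IW_def)
  also have "\<dots> = (\<integral>v. nu v * Psi v \<partial>lborel)" using pv by simp
  finally show "(\<integral>x. 2 * w x * iter_partial ps (f k) x - (w x)\<^sup>2 / T k x * f k x \<partial>lebPi k) = (\<integral>v. nu v * Psi v \<partial>lborel)" .
  have "integrable lborel (\<lambda>v. 2 * (-1) ^ ?j * (nu v * IA v) - nu v * IW v)"
    using FA(2) FW(2) by (simp add: IA_def IW_def)
  then show "integrable lborel (\<lambda>v. nu v * Psi v)" using pv by simp
qed

end

lemma key_ineq:
  fixes T b w a :: real
  assumes "0 < T" "0 < b"
  shows "2 * w * a - w\<^sup>2 / T * b \<le> T * a\<^sup>2 / b"
proof -
  have "T * a\<^sup>2 / b - (2 * w * a - w\<^sup>2 / T * b) = (T * a - w * b)\<^sup>2 / (T * b)"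
    using assms by (simp add: field_simps power2_eq_square)
  also have "\<dots> \<ge> 0" using assms by simp
  finally show ?thesis by simp
qed

lemma low_aux:
  fixes c T f d a :: real
  assumes c: "0 \<le> c" "c \<le> 1" and T: "0 < T" and f: "0 \<le> f" "f \<le> d" and d: "0 < d"
  shows "T * c * a\<^sup>2 / d \<le> 2 * (c * T * a * (1 / d ^ 1)) * a - (c * T * a * (1 / d ^ 1))\<^sup>2 / T * f"
proof -
  define q where "q = T * c * a\<^sup>2 / d"
  have q0: "0 \<le> q" unfolding q_def using c T d by simp
  have r: "c * (f / d) \<le> 1"
    using c f d by (intro mult_le_one) (auto simp: divide_le_eq_1)
  have e1: "2 * (c * T * a * (1 / d ^ 1)) * a = 2 * q"
    unfolding q_def using d by (simp add: power2_eq_square field_simps)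
  have e2: "(c * T * a * (1 / d ^ 1))\<^sup>2 / T * f = q * (c * (f / d))"
    unfolding q_def using T d by (simp add: power2_eq_square field_simps)
  have "q * (c * (f / d)) \<le> q * 1" using r q0 by (rule mult_left_mono)
  then show ?thesis unfolding e1 e2 q_def[symmetric] by simp
qed

lemma low_ineq:
  fixes c T f e a :: real
  assumes c: "0 \<le> c" "c \<le> 1" and T: "0 < T" and f: "0 \<le> f" and e: "0 < e"
  shows "T * c * a\<^sup>2 / (f + e) \<le> 2 * (c * T * a * (1 / (f + e) ^ 1)) * a - (c * T * a * (1 / (f + e) ^ 1))\<^sup>2 / T * f"
proof -
  have "f \<le> f + e" "0 < f + e" using f e by linarith+
  from low_aux[OF c T f this] show ?thesis .
qed

context setting begin

lemma finL: "finite {ps. set ps \<subseteq> dirs n \<and> length ps = j}"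
  by (rule finite_lists_length_eq) (simp add: dirs_def)

lemma cont_dnorm2: "continuous_on (conf (Suc k)) (dnorm2 (Suc k) j (f (Suc k)))"
  unfolding dnorm2_def
proof (intro continuous_on_sum continuous_intros)
  fix ps :: "(nat \<times> 'd) list" assume "ps \<in> {ps. set ps \<subseteq> dirs (Suc k) \<and> length ps = j}"
  then show "continuous_on (conf (Suc k)) (iter_partial ps (f (Suc k)))"
    using Dk_cont[OF Dk_iter[of 0 ps "Suc k" "f (Suc k)"]] Dk_f1 by simp
qed

lemma info_meas:
  "(\<lambda>z. ennreal (T (Suc k) z * dnorm2 (Suc k) j (f (Suc k)) z / f (Suc k) z)) \<in> borel_measurable (lebPi (Suc k))"
proof -
  have "(\<lambda>z. T (Suc k) z * dnorm2 (Suc k) j (f (Suc k)) z / f (Suc k) z) \<in> borel_measurable (lebPi (Suc k))"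
    by (intro borel_measurable_divide borel_measurable_times cont_meas cont_dnorm2 Dk_cont[OF Dk_T] Dk_cont[OF Dk_f1])
  then show ?thesis using measurable_compose[OF _ measurable_ennreal] by blast
qed

lemma info_Suc_split:
  "info N m nu j (Suc k) = (\<integral>\<^sup>+ v. \<integral>\<^sup>+ x. ennreal (T (Suc k) (x(k := v)) * dnorm2 (Suc k) j (f (Suc k)) (x(k := v)) / f (Suc k) (x(k := v))) \<partial>lebPi k \<partial>lborel)"
  unfolding info_def using nn_lebPi_Suc(1)[OF info_meas] by simp

lemma upper:
  fixes j :: nat and w :: "(nat \<times> 'd) list \<Rightarrow> 'd cfg \<Rightarrow> real"
  defines "L \<equiv> {ps. set ps \<subseteq> dirs k \<and> length ps = j}"
  assumes wD: "\<And>ps. ps \<in> L \<Longrightarrow> Dk j k (w ps)" and wS: "\<And>ps. ps \<in> L \<Longrightarrow> supp_in k R (w ps)"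
  shows "ennreal (\<Sum>ps\<in>L. \<integral>x. 2 * w ps x * iter_partial ps (f k) x - (w ps x)\<^sup>2 / T k x * f k x \<partial>lebPi k)
          \<le> info N m nu j (Suc k)"
proof -
  have fL: "finite L" unfolding L_def by (rule finL)
  define L1 where "L1 = {ps :: (nat \<times> 'd) list. set ps \<subseteq> dirs (Suc k) \<and> length ps = j}"
  have fL1: "finite L1" unfolding L1_def by (rule finL)
  have LL1: "L \<subseteq> L1" unfolding L_def L1_def by (auto simp: dirs_def)
  define h where "h ps v x = 2 * w ps x * iter_partial ps (f (Suc k)) (x(k := v)) - (w ps x)\<^sup>2 / T k x * f (Suc k) (x(k := v))" for ps v x
  have P: "(\<integral>x. 2 * w ps x * iter_partial ps (f k) x - (w ps x)\<^sup>2 / T k x * f k x \<partial>lebPi k) = (\<integral>v. nu v * (\<integral>x. h ps v x \<partial>lebPi k) \<partial>lborel)"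
    and Pi: "integrable lborel (\<lambda>v. nu v * (\<integral>x. h ps v x \<partial>lebPi k))" if ps: "ps \<in> L" for ps
  proof -
    have a: "Dk (length ps) k (w ps)" "supp_in k R (w ps)" "set ps \<subseteq> dirs k" using wD[OF ps] wS[OF ps] ps by (auto simp: L_def)
    show "(\<integral>x. 2 * w ps x * iter_partial ps (f k) x - (w ps x)\<^sup>2 / T k x * f k x \<partial>lebPi k) = (\<integral>v. nu v * (\<integral>x. h ps v x \<partial>lebPi k) \<partial>lborel)"
      using phi_id(1)[OF a] unfolding h_def .
    show "integrable lborel (\<lambda>v. nu v * (\<integral>x. h ps v x \<partial>lebPi k))"
      using phi_id(2)[OF a] unfolding h_def .
  qed
  have hint: "integrable (lebPi k) (h ps v)" if ps: "ps \<in> L" for ps v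
  proof (rule integrable_cs)
    have cw: "continuous_on (conf k) (w ps)" using Dk_cont[OF wD[OF ps]] .
    have sp: "set ps \<subseteq> dirs k" using ps by (simp add: L_def)
    show "continuous_on (conf k) (h ps v)" unfolding h_def
      using cw cont_iter_sec[OF sp] cont_T T_pos cont_sec
      by (intro continuous_intros) (auto simp: less_imp_neq[symmetric])
    show "supp_in k R (h ps v)" using wS[OF ps] by (simp add: supp_in_def h_def)
  qed
  have "(\<Sum>ps\<in>L. \<integral>x. 2 * w ps x * iter_partial ps (f k) x - (w ps x)\<^sup>2 / T k x * f k x \<partial>lebPi k)
      = (\<Sum>ps\<in>L. \<integral>v. nu v * (\<integral>x. h ps v x \<partial>lebPi k) \<partial>lborel)"
    using P by simp
  also have "\<dots> = (\<integral>v. (\<Sum>ps\<in>L. nu v * (\<integral>x. h ps v x \<partial>lebPi k)) \<partial>lborel)"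
    by (rule Bochner_Integration.integral_sum[where f="\<lambda>ps v. nu v * (\<integral>x. h ps v x \<partial>lebPi k)", symmetric]) (rule Pi)
  finally have eq: "(\<Sum>ps\<in>L. \<integral>x. 2 * w ps x * iter_partial ps (f k) x - (w ps x)\<^sup>2 / T k x * f k x \<partial>lebPi k)
      = (\<integral>v. (\<Sum>ps\<in>L. nu v * (\<integral>x. h ps v x \<partial>lebPi k)) \<partial>lborel)" .
  have "ennreal (\<integral>v. (\<Sum>ps\<in>L. nu v * (\<integral>x. h ps v x \<partial>lebPi k)) \<partial>lborel)
     \<le> (\<integral>\<^sup>+ v. \<integral>\<^sup>+ x. ennreal (T (Suc k) (x(k := v)) * dnorm2 (Suc k) j (f (Suc k)) (x(k := v)) / f (Suc k) (x(k := v))) \<partial>lebPi k \<partial>lborel)"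
  proof (rule int_le_nn)
    show "integrable lborel (\<lambda>v. \<Sum>ps\<in>L. nu v * (\<integral>x. h ps v x \<partial>lebPi k))"
      using Pi by (intro Bochner_Integration.integrable_sum) auto
    show "AE v in lborel. ennreal (\<Sum>ps\<in>L. nu v * (\<integral>x. h ps v x \<partial>lebPi k))
       \<le> (\<integral>\<^sup>+ x. ennreal (T (Suc k) (x(k := v)) * dnorm2 (Suc k) j (f (Suc k)) (x(k := v)) / f (Suc k) (x(k := v))) \<partial>lebPi k)"
      using AE_pos_sec
    proof (rule AE_mp)
      show "AE v in lborel. (AE x in lebPi k. 0 < M (Suc k) (x(k := v))) \<longrightarrow> ennreal (\<Sum>ps\<in>L. nu v * (\<integral>x. h ps v x \<partial>lebPi k))
       \<le> (\<integral>\<^sup>+ x. ennreal (T (Suc k) (x(k := v)) * dnorm2 (Suc k) j (f (Suc k)) (x(k := v)) / f (Suc k) (x(k := v))) \<partial>lebPi k)"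
      proof (rule AE_I2, rule impI)
        fix v :: "real^'d" assume pos: "AE x in lebPi k. 0 < M (Suc k) (x(k := v))"
        have "(\<Sum>ps\<in>L. nu v * (\<integral>x. h ps v x \<partial>lebPi k)) = (\<Sum>ps\<in>L. (\<integral>x. nu v * h ps v x \<partial>lebPi k))"
          by simp
        also have "\<dots> = (\<integral>x. (\<Sum>ps\<in>L. nu v * h ps v x) \<partial>lebPi k)"
          by (rule Bochner_Integration.integral_sum[where f="\<lambda>ps x. nu v * h ps v x", symmetric]) (use hint in simp)
        finally have eqv: "(\<Sum>ps\<in>L. nu v * (\<integral>x. h ps v x \<partial>lebPi k)) = (\<integral>x. (\<Sum>ps\<in>L. nu v * h ps v x) \<partial>lebPi k)" .
        have "ennreal (\<integral>x. (\<Sum>ps\<in>L. nu v * h ps v x) \<partial>lebPi k)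
          \<le> (\<integral>\<^sup>+ x. ennreal (T (Suc k) (x(k := v)) * dnorm2 (Suc k) j (f (Suc k)) (x(k := v)) / f (Suc k) (x(k := v))) \<partial>lebPi k)"
        proof (rule int_le_nn)
          show "integrable (lebPi k) (\<lambda>x. \<Sum>ps\<in>L. nu v * h ps v x)"
            using hint by (intro Bochner_Integration.integrable_sum integrable_mult_right) auto
          show "AE x in lebPi k. ennreal (\<Sum>ps\<in>L. nu v * h ps v x)
              \<le> ennreal (T (Suc k) (x(k := v)) * dnorm2 (Suc k) j (f (Suc k)) (x(k := v)) / f (Suc k) (x(k := v)))"
            using pos
          proof (rule AE_mp)
            show "AE x in lebPi k. 0 < M (Suc k) (x(k := v)) \<longrightarrow> ennreal (\<Sum>ps\<in>L. nu v * h ps v x)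
              \<le> ennreal (T (Suc k) (x(k := v)) * dnorm2 (Suc k) j (f (Suc k)) (x(k := v)) / f (Suc k) (x(k := v)))"
            proof (rule AE_I2, rule impI, rule ennreal_leI)
              fix x :: "'d cfg" assume x: "x \<in> space (lebPi k)" and Mp: "0 < M (Suc k) (x(k := v))"
              let ?b = "f (Suc k) (x(k := v))"
              have Tp: "0 < T k x" by (rule T_pos)
              have np: "0 < nu v" by (rule nu_pos)
              have bp: "0 < ?b" unfolding f_upd using Mp Tp np by simp
              have "(\<Sum>ps\<in>L. nu v * h ps v x) \<le> (\<Sum>ps\<in>L. nu v * (T k x * (iter_partial ps (f (Suc k)) (x(k := v)))\<^sup>2 / ?b))"
                unfolding h_def using key_ineq[OF Tp bp] np by (intro sum_mono mult_left_mono) (auto simp: mult.assoc)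
              also have "\<dots> = nu v * T k x / ?b * (\<Sum>ps\<in>L. (iter_partial ps (f (Suc k)) (x(k := v)))\<^sup>2)"
                by (simp add: sum_distrib_left mult.assoc)
              also have "\<dots> \<le> nu v * T k x / ?b * (\<Sum>ps\<in>L1. (iter_partial ps (f (Suc k)) (x(k := v)))\<^sup>2)"
                using Tp np bp by (intro mult_left_mono sum_mono2[OF fL1 LL1]) auto
              also have "\<dots> = T (Suc k) (x(k := v)) * dnorm2 (Suc k) j (f (Suc k)) (x(k := v)) / ?b"
                unfolding dnorm2_def L1_def T_upd by (simp add: mult.commute)
              finally show "(\<Sum>ps\<in>L. nu v * h ps v x) \<le> T (Suc k) (x(k := v)) * dnorm2 (Suc k) j (f (Suc k)) (x(k := v)) / ?b" .
            qed
          qed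
        qed
        then show "ennreal (\<Sum>ps\<in>L. nu v * (\<integral>x. h ps v x \<partial>lebPi k))
          \<le> (\<integral>\<^sup>+ x. ennreal (T (Suc k) (x(k := v)) * dnorm2 (Suc k) j (f (Suc k)) (x(k := v)) / f (Suc k) (x(k := v))) \<partial>lebPi k)"
          unfolding eqv .
      qed
    qed
  qed
  then show ?thesis unfolding eq info_Suc_split .
qed

end

context setting begin

lemma info_step: "info N m nu j k \<le> info N m nu j (Suc k)"
proof -
  define L where "L = {ps :: (nat \<times> 'd) list. set ps \<subseteq> dirs k \<and> length ps = j}"
  have fL: "finite L" unfolding L_def by (rule finL)
  define ep where "ep l = inverse (real (Suc l))" for l :: nat
  define ch :: "nat \<Rightarrow> 'd cfg \<Rightarrow> real" where "ch l = chi (j + 2) k l" for l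
  define a where "a ps = iter_partial ps (f k)" for ps
  define w where "w l ps x = ch l x * T k x * a ps x * (1 / (f k x + ep l) ^ 1)" for l ps x
  define g where "g l x = T k x * ch l x * (\<Sum>ps\<in>L. (a ps x)\<^sup>2) / (f k x + ep l)" for l x
  have ep0: "0 < ep l" for l unfolding ep_def by simp
  have fk0: "x \<in> conf k \<Longrightarrow> 0 \<le> f k x" for x using f_nonneg kN by simp
  have den0: "x \<in> conf k \<Longrightarrow> 0 < f k x + ep l" for x l using fk0[of x] ep0[of l] by linarith
  have fk_gt: "x \<in> conf k \<Longrightarrow> - ep l < f k x" for x l using den0[of x l] by linarith
  have chD: "Dk j k (ch l)" for l unfolding ch_def by (rule Dk_chi) simp
  have aD: "ps \<in> L \<Longrightarrow> Dk r k (a ps)" for ps r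
    unfolding a_def using Dk_iter[of r ps k "f k"] Dk_fk by (simp add: L_def)
  have invD: "Dk j k (\<lambda>x. 1 / (f k x + ep l) ^ 1)" for l
    by (rule Dk_comp[OF open_pos hD_inv Dk_fk]) (use ep0 fk_gt in \<open>auto simp: less_imp_le\<close>)
  have wD: "Dk j k (w l ps)" if ps: "ps \<in> L" for l ps
    unfolding w_def by (intro Dk_mult chD Dk_T aD[OF ps] invD)
  have chS: "supp_in k (real (Suc l)) (ch l)" for l unfolding ch_def by (rule chi_supp) simp
  have wS: "supp_in k (real (Suc l)) (w l ps)" for l ps
    unfolding w_def by (intro supp_mult chS)
  have UB: "ennreal (\<Sum>ps\<in>L. \<integral>x. 2 * w l ps x * iter_partial ps (f k) x - (w l ps x)\<^sup>2 / T k x * f k x \<partial>lebPi k)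
      \<le> info N m nu j (Suc k)" for l
    unfolding L_def by (rule upper[where R = "real (Suc l)"]) (use wD wS in \<open>auto simp: L_def\<close>)
  have cch: "continuous_on (conf k) (ch l)" for l using Dk_cont[OF chD] .
  have ca: "ps \<in> L \<Longrightarrow> continuous_on (conf k) (a ps)" for ps using Dk_cont[OF aD] by blast
  have cg: "continuous_on (conf k) (g l)" for l
    unfolding g_def using cont_T cch ca cont_fk den0
    by (intro continuous_intros continuous_on_sum) (auto simp: less_imp_neq[symmetric] dest: den0)
  have sg: "supp_in k (real (Suc l)) (g l)" for l
    using chS[of l] by (simp add: supp_in_def g_def)
  have gint: "integrable (lebPi k) (g l)" for l by (rule integrable_supp[OF cg sg])
  have g0: "x \<in> conf k \<Longrightarrow> 0 \<le> g l x" for x l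
    unfolding g_def using T_pos[of k x] chi_bounds[of "j+2" k l x] den0[of x l]
    by (intro divide_nonneg_pos mult_nonneg_nonneg sum_nonneg) (auto simp: ch_def less_imp_le)
  have cw: "ps \<in> L \<Longrightarrow> continuous_on (conf k) (w l ps)" for l ps using Dk_cont[OF wD] by blast
  have tint: "integrable (lebPi k) (\<lambda>x. 2 * w l ps x * iter_partial ps (f k) x - (w l ps x)\<^sup>2 / T k x * f k x)"
    if ps: "ps \<in> L" for l ps
  proof (rule integrable_supp[where R = "real (Suc l)"])
    show "continuous_on (conf k) (\<lambda>x. 2 * w l ps x * iter_partial ps (f k) x - (w l ps x)\<^sup>2 / T k x * f k x)"
      using cw[OF ps] ca[OF ps] cont_T T_pos cont_fk unfolding a_def
      by (intro continuous_intros) (auto simp: less_imp_neq[symmetric])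
    show "supp_in k (real (Suc l)) (\<lambda>x. 2 * w l ps x * iter_partial ps (f k) x - (w l ps x)\<^sup>2 / T k x * f k x)"
      using wS[of l ps] by (simp add: supp_in_def)
  qed
  have LB: "(\<integral>x. g l x \<partial>lebPi k) \<le> (\<Sum>ps\<in>L. \<integral>x. 2 * w l ps x * iter_partial ps (f k) x - (w l ps x)\<^sup>2 / T k x * f k x \<partial>lebPi k)" for l
  proof -
    have "(\<Sum>ps\<in>L. \<integral>x. 2 * w l ps x * iter_partial ps (f k) x - (w l ps x)\<^sup>2 / T k x * f k x \<partial>lebPi k)
        = (\<integral>x. (\<Sum>ps\<in>L. 2 * w l ps x * iter_partial ps (f k) x - (w l ps x)\<^sup>2 / T k x * f k x) \<partial>lebPi k)"
      by (rule Bochner_Integration.integral_sum[where f = "\<lambda>ps x. 2 * w l ps x * iter_partial ps (f k) x - (w l ps x)\<^sup>2 / T k x * f k x", symmetric])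
         (rule tint)
    moreover have "(\<integral>x. g l x \<partial>lebPi k) \<le> (\<integral>x. (\<Sum>ps\<in>L. 2 * w l ps x * iter_partial ps (f k) x - (w l ps x)\<^sup>2 / T k x * f k x) \<partial>lebPi k)"
    proof (rule Bochner_Integration.integral_mono[OF gint])
      show "integrable (lebPi k) (\<lambda>x. \<Sum>ps\<in>L. 2 * w l ps x * iter_partial ps (f k) x - (w l ps x)\<^sup>2 / T k x * f k x)"
        using tint by (intro Bochner_Integration.integrable_sum) auto
      fix x :: "'d cfg" assume "x \<in> space (lebPi k)"
      then have x: "x \<in> conf k" by simp
      have "g l x = (\<Sum>ps\<in>L. T k x * ch l x * (a ps x)\<^sup>2 / (f k x + ep l))"
        unfolding g_def by (simp add: sum_distrib_left sum_divide_distrib)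
      also have "\<dots> \<le> (\<Sum>ps\<in>L. 2 * w l ps x * iter_partial ps (f k) x - (w l ps x)\<^sup>2 / T k x * f k x)"
      proof (rule sum_mono)
        fix ps assume "ps \<in> L"
        show "T k x * ch l x * (a ps x)\<^sup>2 / (f k x + ep l) \<le> 2 * w l ps x * iter_partial ps (f k) x - (w l ps x)\<^sup>2 / T k x * f k x"
          unfolding w_def a_def[symmetric]
          using low_ineq[of "ch l x" "T k x" "f k x" "ep l" "a ps x"] chi_bounds[of "j+2" k l x] T_pos[of k x] fk0[OF x] ep0[of l]
          by (simp add: ch_def)
      qed
      finally show "g l x \<le> (\<Sum>ps\<in>L. 2 * w l ps x * iter_partial ps (f k) x - (w l ps x)\<^sup>2 / T k x * f k x)" .
    qed
    ultimately show ?thesis by simp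
  qed
  have gnn: "(\<integral>\<^sup>+x. ennreal (g l x) \<partial>lebPi k) = ennreal (\<integral>x. g l x \<partial>lebPi k)" for l
    by (rule nn_integral_eq_integral[OF gint]) (rule AE_I2, use g0 in simp)
  have step: "(\<integral>\<^sup>+x. ennreal (g l x) \<partial>lebPi k) \<le> info N m nu j (Suc k)" for l
    using order_trans[OF ennreal_leI[OF LB] UB] gnn by simp
  have mono: "g l x \<le> g (Suc l) x" if x: "x \<in> conf k" for l x
  proof -
    have S0: "0 \<le> T k x * (\<Sum>ps\<in>L. (a ps x)\<^sup>2)" using T_pos[of k x] by (intro mult_nonneg_nonneg sum_nonneg) auto
    have "ch l x / (f k x + ep l) \<le> ch (Suc l) x / (f k x + ep (Suc l))"
    proof (rule frac_le)
      show "0 \<le> ch (Suc l) x" using chi_bounds[of "j+2" k "Suc l" x] by (simp add: ch_def)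
      show "ch l x \<le> ch (Suc l) x" unfolding ch_def by (rule chi_mono) simp
      show "0 < f k x + ep (Suc l)" by (rule den0[OF x])
      show "f k x + ep (Suc l) \<le> f k x + ep l" unfolding ep_def
        by (simp add: le_imp_inverse_le)
    qed
    then have "T k x * (\<Sum>ps\<in>L. (a ps x)\<^sup>2) * (ch l x / (f k x + ep l)) \<le> T k x * (\<Sum>ps\<in>L. (a ps x)\<^sup>2) * (ch (Suc l) x / (f k x + ep (Suc l)))"
      using S0 by (rule mult_left_mono)
    then show ?thesis unfolding g_def by (simp add: mult_ac)
  qed
  have lim: "(\<lambda>l. g l x) \<longlonglongrightarrow> T k x * dnorm2 k j (f k) x / f k x" if x: "x \<in> conf k" and fp: "0 < f k x" for x
  proof -
    have d: "dnorm2 k j (f k) x = (\<Sum>ps\<in>L. (a ps x)\<^sup>2)" unfolding dnorm2_def L_def a_def ..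
    have epl: "ep \<longlonglongrightarrow> 0" unfolding ep_def by (rule LIMSEQ_inverse_real_of_nat)
    have "(\<lambda>l. T k x * ch l x * (\<Sum>ps\<in>L. (a ps x)\<^sup>2) / (f k x + ep l)) \<longlonglongrightarrow> T k x * 1 * (\<Sum>ps\<in>L. (a ps x)\<^sup>2) / (f k x + 0)"
      using chi_lim[of "j+2" k x] epl fp unfolding ch_def by (intro tendsto_intros) auto
    then show ?thesis unfolding g_def d by simp
  qed
  have mg: "(\<lambda>x. ennreal (g l x)) \<in> borel_measurable (lebPi k)" for l
    using measurable_compose[OF cont_meas[OF cg] measurable_ennreal] .
  have "info N m nu j k = (\<integral>\<^sup>+ x. ennreal (T k x * dnorm2 k j (f k) x / f k x) \<partial>lebPi k)"
    unfolding info_def ..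
  also have "\<dots> \<le> (\<integral>\<^sup>+ x. (SUP l. ennreal (g l x)) \<partial>lebPi k)"
  proof (rule nn_integral_mono)
    fix x :: "'d cfg" assume "x \<in> space (lebPi k)"
    then have x: "x \<in> conf k" by simp
    show "ennreal (T k x * dnorm2 k j (f k) x / f k x) \<le> (SUP l. ennreal (g l x))"
    proof (cases "f k x = 0")
      case True then show ?thesis by simp
    next
      case False
      then have fp: "0 < f k x" using fk0[OF x] by linarith
      have "(\<lambda>l. ennreal (g l x)) \<longlonglongrightarrow> ennreal (T k x * dnorm2 k j (f k) x / f k x)"
        by (rule tendsto_ennrealI[OF lim[OF x fp]])
      then show ?thesis
      proof (rule LIMSEQ_le_const2)
        show "\<exists>N. \<forall>n\<ge>N. ennreal (g n x) \<le> (SUP l. ennreal (g l x))"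
          by (intro exI[of _ 0] allI impI SUP_upper) simp
      qed
    qed
  qed
  also have "\<dots> = (SUP l. \<integral>\<^sup>+ x. ennreal (g l x) \<partial>lebPi k)"
  proof (rule nn_integral_monotone_convergence_SUP_AE[OF _ mg])
    fix l show "AE x in lebPi k. ennreal (g l x) \<le> ennreal (g (Suc l) x)"
      by (rule AE_I2) (use mono in \<open>auto intro: ennreal_leI\<close>)
  qed
  also have "\<dots> \<le> info N m nu j (Suc k)"
    by (rule SUP_least) (rule step)
  finally show ?thesis .
qed

end

theorem mainTheorem6:
  fixes N :: nat and m :: "'d::finite cfg \<Rightarrow> real" and \<nu> :: "real^'d \<Rightarrow> real"
  assumes "smooth_pos_density N m"
    and "smooth_pos_density_Rd \<nu>"
    and "\<And>k. 1 \<le> k \<Longrightarrow> k \<le> N \<Longrightarrow> smooth_conf k (marginal N m k)"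
    and "1 \<le> k" and "k \<le> N - 1"
  shows "info N m \<nu> 1 k \<le> info N m \<nu> 1 (k + 1) \<and>
         info N m \<nu> 2 k \<le> info N m \<nu> 2 (k + 1) \<and>
         info N m \<nu> 3 k \<le> info N m \<nu> 3 (k + 1)"
  proof -
  have N: "Suc k \<le> N" using assms(4,5) by linarith
  interpret S: setting N m \<nu> k
    using assms N by unfold_locales auto
  show ?thesis using S.info_step[of 1] S.info_step[of 2] S.info_step[of 3] by simp
qed

end
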